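(* Every proper quasi-tree is $(1,C)$-quasi-isometric to a locally finite simplicial tree, for some $C\geqslant 0$.
   Context: A quasi-tree is a geodesic metric space quasi-isometric to a simplicial tree; proper means closed balls are compact. A simplicial tree is a 1-dimensional simplicial complex which is an $\mathbb{R}$-tree for the path metric with unit edges; locally finite means each vertex has finitely many neighbours. A $(1,C)$-quasi-isometry $f$ satisfies $d(a,b)-C\leqslant d(f(a),f(b))\leqslant d(a,b)+C$ and has $C$-dense image. *)

theory Defs
  imports "HOL-Analysis.Analysis"
begin

definition geodesic_space :: "'a::metric_space itself \<Rightarrow> bool" where
  "geodesic_space _ \<longleftrightarrow>
     (\<forall>x y::'a. \<exists>\<gamma>::real \<Rightarrow> 'a. \<gamma> 0 = x \<and> \<gamma> (dist x y) = y \<and>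
        (\<forall>s\<in>{0..dist x y}. \<forall>t\<in>{0..dist x y}. dist (\<gamma> s) (\<gamma> t) = \<bar>s - t\<bar>))"

definition proper_space :: "'a::metric_space itself \<Rightarrow> bool" where
  "proper_space _ \<longleftrightarrow> (\<forall>(x::'a) r. compact (cball x r))"

definition qi_map :: "real \<Rightarrow> real \<Rightarrow> 'a set \<Rightarrow> ('a \<Rightarrow> 'a \<Rightarrow> real)
     \<Rightarrow> 'b set \<Rightarrow> ('b \<Rightarrow> 'b \<Rightarrow> real) \<Rightarrow> ('a \<Rightarrow> 'b) \<Rightarrow> bool" where
  "qi_map K C A dA B dB f \<longleftrightarrow>
     f ` A \<subseteq> B \<and>
     (\<forall>a\<in>A. \<forall>b\<in>A. dA a b / K - C \<le> dB (f a) (f b) \<and> dB (f a) (f b) \<le> K * dA a b + C) \<and>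
     (\<forall>y\<in>B. \<exists>a\<in>A. dB y (f a) \<le> C)"

definition quasi_isometric :: "'a set \<Rightarrow> ('a \<Rightarrow> 'a \<Rightarrow> real)
     \<Rightarrow> 'b set \<Rightarrow> ('b \<Rightarrow> 'b \<Rightarrow> real) \<Rightarrow> bool" where
  "quasi_isometric A dA B dB \<longleftrightarrow> (\<exists>K C f. K \<ge> 1 \<and> C \<ge> 0 \<and> qi_map K C A dA B dB f)"

definition walk :: "('v \<Rightarrow> 'v \<Rightarrow> bool) \<Rightarrow> 'v list \<Rightarrow> bool" where
  "walk E xs \<longleftrightarrow> xs \<noteq> [] \<and> (\<forall>i. Suc i < length xs \<longrightarrow> E (xs ! i) (xs ! Suc i))"

definition is_tree :: "'v set \<Rightarrow> ('v \<Rightarrow> 'v \<Rightarrow> bool) \<Rightarrow> bool" where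
  "is_tree V E \<longleftrightarrow>
     V \<noteq> {} \<and>
     (\<forall>u v. E u v \<longrightarrow> u \<in> V \<and> v \<in> V \<and> u \<noteq> v \<and> E v u) \<and>
     (\<forall>u\<in>V. \<forall>v\<in>V. \<exists>xs. walk E xs \<and> hd xs = u \<and> last xs = v) \<and>
     \<not> (\<exists>xs. walk E xs \<and> length xs \<ge> 3 \<and> distinct xs \<and> E (last xs) (hd xs))"

definition locally_finite_graph :: "'v set \<Rightarrow> ('v \<Rightarrow> 'v \<Rightarrow> bool) \<Rightarrow> bool" where
  "locally_finite_graph V E \<longleftrightarrow> (\<forall>v\<in>V. finite {w. E v w})"

definition gdist :: "('v \<Rightarrow> 'v \<Rightarrow> bool) \<Rightarrow> 'v \<Rightarrow> 'v \<Rightarrow> real" where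
  "gdist E u v = real (LEAST n. \<exists>xs. walk E xs \<and> hd xs = u \<and> last xs = v \<and> length xs = Suc n)"

text \<open>Points of the geometric realisation: a triple (u,v,t) is the point on the edge
  from u to v at distance t from u (vertices are (v,v,0)); (u,v,t) and (v,u,1-t)
  represent the same point (they are at distance 0).\<close>
definition tree_points :: "'v set \<Rightarrow> ('v \<Rightarrow> 'v \<Rightarrow> bool) \<Rightarrow> ('v \<times> 'v \<times> real) set" where
  "tree_points V E = {(u,v,t). (u = v \<and> u \<in> V \<and> t = 0) \<or> (E u v \<and> 0 \<le> t \<and> t \<le> 1)}"

text \<open>Path metric with unit edge lengths on the geometric realisation.\<close>
definition tree_dist :: "('v \<Rightarrow> 'v \<Rightarrow> bool) \<Rightarrow> ('v \<times> 'v \<times> real) \<Rightarrow> ('v \<times> 'v \<times> real) \<Rightarrow> real" where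
  "tree_dist E p q =
     (case p of (u,v,s) \<Rightarrow> case q of (c,d,t) \<Rightarrow>
       (let via = min (min (s + gdist E u c + t) (s + gdist E u d + (1 - t)))
                      (min ((1 - s) + gdist E v c + t) ((1 - s) + gdist E v d + (1 - t)))
        in if (u,v) = (c,d) then min \<bar>s - t\<bar> via
           else if (u,v) = (d,c) then min \<bar>s - (1 - t)\<bar> via
           else via))"

end

theory Submission
  imports Defs
begin


lemma walk_Nil[simp]: "\<not> walk E []" by (simp add: walk_def)

lemma walk_single[simp]: "walk E [x]" by (simp add: walk_def)

lemma walk_Cons: "walk E (x # xs) \<longleftrightarrow> (xs = [] \<or> (E x (hd xs) \<and> walk E xs))"
proof
  assume w: "walk E (x # xs)"
  show "xs = [] \<or> (E x (hd xs) \<and> walk E xs)"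
  proof (cases xs)
    case Nil then show ?thesis by simp
  next
    case (Cons y ys)
    have a: "\<forall>i. Suc i < length (x#y#ys) \<longrightarrow> E ((x#y#ys)!i) ((x#y#ys)!Suc i)"
      using w Cons unfolding walk_def by simp
    have "E x y" using a[rule_format, of 0] by simp
    moreover have "walk E xs" unfolding walk_def Cons
    proof (intro conjI allI impI)
      fix i assume "Suc i < length (y # ys)"
      then show "E ((y # ys) ! i) ((y # ys) ! Suc i)" using a[rule_format, of "Suc i"] by simp
    qed simp
    ultimately show ?thesis using Cons by simp
  qed
next
  assume h: "xs = [] \<or> (E x (hd xs) \<and> walk E xs)"
  show "walk E (x # xs)"
  proof (cases xs)
    case Nil then show ?thesis by simp
  next
    case (Cons y ys)
    with h have "E x y" "walk E xs" by auto
    then show ?thesis using Cons unfolding walk_def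
      by (auto simp: nth_Cons split: nat.splits)
  qed
qed

lemma walk_Cons2[simp]: "walk E (x # y # xs) \<longleftrightarrow> E x y \<and> walk E (y # xs)"
  using walk_Cons[of E x "y # xs"] by auto

lemma walk_append:
  assumes "walk E xs" "walk E ys" "E (last xs) (hd ys)"
  shows "walk E (xs @ ys)"
  using assms
proof (induction xs)
  case Nil then show ?case by simp
next
  case (Cons x xs)
  show ?case
  proof (cases "xs = []")
    case True
    then show ?thesis using Cons.prems walk_Cons[of E x ys] by auto
  next
    case False
    then obtain y zs where Cons2: "xs = y # zs" by (cases xs) auto
    have "walk E xs" using Cons.prems(1) Cons2 by simp
    moreover have "E (last xs) (hd ys)" using Cons.prems(3) Cons2 by simp
    ultimately have "walk E (xs @ ys)" using Cons.IH Cons.prems(2) by blast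
    then show ?thesis using Cons.prems(1) Cons2 by simp
  qed
qed

lemma walk_append_shared:
  assumes "walk E xs" "walk E ys" "last xs = hd ys"
  shows "walk E (xs @ tl ys)"
proof (cases "tl ys")
  case Nil then show ?thesis using assms by simp
next
  case (Cons z zs)
  have ys: "ys = hd ys # z # zs" using assms(2) Cons
    by (cases ys) auto
  have "walk E (hd ys # z # zs)" using assms(2) ys by simp
  then have "E (hd ys) z" "walk E (z # zs)" by simp_all
  then show ?thesis using walk_append[OF assms(1), of "tl ys"] Cons assms(3) by simp
qed

lemma walk_rev:
  assumes sym: "\<And>u v. E u v \<Longrightarrow> E v u" and "walk E xs"
  shows "walk E (rev xs)"
  using assms(2)
proof (induction xs)
  case Nil then show ?case by simp
next
  case (Cons x xs)
  show ?case
  proof (cases "xs = []")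
    case True then show ?thesis by simp
  next
    case False
    then obtain y zs where Cons2: "xs = y # zs" by (cases xs) auto
    have "walk E xs" "E x y" using Cons.prems Cons2 by auto
    then have "walk E (rev xs)" using Cons.IH by blast
    moreover have "E (last (rev xs)) (hd [x])" using \<open>E x y\<close> sym Cons2 by (simp add: last_rev)
    ultimately show ?thesis using walk_append[of E "rev xs" "[x]"] by simp
  qed
qed

lemma walk_nth: "walk E xs \<Longrightarrow> Suc i < length xs \<Longrightarrow> E (xs ! i) (xs ! Suc i)"
  by (simp add: walk_def)

lemma walk_take: "walk E xs \<Longrightarrow> 0 < k \<Longrightarrow> walk E (take k xs)"
  unfolding walk_def by auto

lemma walk_drop: "walk E xs \<Longrightarrow> k < length xs \<Longrightarrow> walk E (drop k xs)"
  unfolding walk_def by auto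

definition gd :: "('v \<Rightarrow> 'v \<Rightarrow> bool) \<Rightarrow> 'v \<Rightarrow> 'v \<Rightarrow> nat" where
  "gd E u v = (LEAST n. \<exists>xs. walk E xs \<and> hd xs = u \<and> last xs = v \<and> length xs = Suc n)"

lemma gdist_gd: "gdist E u v = real (gd E u v)"
  by (simp add: gdist_def gd_def)

definition conn :: "('v \<Rightarrow> 'v \<Rightarrow> bool) \<Rightarrow> 'v \<Rightarrow> 'v \<Rightarrow> bool" where
  "conn E u v \<longleftrightarrow> (\<exists>xs. walk E xs \<and> hd xs = u \<and> last xs = v)"

lemma last_shared: "xs \<noteq> [] \<Longrightarrow> ys \<noteq> [] \<Longrightarrow> last xs = hd ys \<Longrightarrow> last (xs @ tl ys) = last ys"
  by (cases ys) auto

lemma gd_le: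
  assumes "walk E xs" "hd xs = u" "last xs = v"
  shows "gd E u v \<le> length xs - 1"
proof -
  have "length xs = Suc (length xs - 1)" using assms(1) by (cases xs) auto
  then show ?thesis unfolding gd_def using assms by (intro Least_le) blast
qed

lemma gd_ex:
  assumes "conn E u v"
  obtains xs where "walk E xs" "hd xs = u" "last xs = v" "length xs = Suc (gd E u v)"
proof -
  from assms obtain xs where xs: "walk E xs" "hd xs = u" "last xs = v" unfolding conn_def by blast
  have "length xs = Suc (length xs - 1)" using xs(1) by (cases xs) auto
  then have "\<exists>n xs. walk E xs \<and> hd xs = u \<and> last xs = v \<and> length xs = Suc n" using xs by blast
  from LeastI_ex[OF this] show ?thesis using that unfolding gd_def by blast
qed

lemma gd_refl[simp]: "gd E u u = 0"
  using gd_le[of E "[u]" u u] by simp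

lemma conn_refl: "conn E u u"
  unfolding conn_def by (intro exI[of _ "[u]"]) simp

lemma gd_edge: "E u v \<Longrightarrow> gd E u v \<le> 1"
  using gd_le[of E "[u,v]" u v] by simp

lemma conn_edge: "E u v \<Longrightarrow> conn E u v"
  unfolding conn_def by (intro exI[of _ "[u,v]"]) simp

lemma conn_trans: "conn E u v \<Longrightarrow> conn E v w \<Longrightarrow> conn E u w"
  unfolding conn_def
proof (elim exE conjE)
  fix xs ys assume a: "walk E xs" "hd xs = u" "last xs = v" "walk E ys" "hd ys = v" "last ys = w"
  have "walk E (xs @ tl ys)" using walk_append_shared a by metis
  moreover have "hd (xs @ tl ys) = u" using a by (cases xs) auto
  moreover have "last (xs @ tl ys) = w" using a last_shared[of xs ys] by (cases xs; cases ys) auto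
  ultimately show "\<exists>xs. walk E xs \<and> hd xs = u \<and> last xs = w" by blast
qed

lemma gd_triangle:
  assumes "conn E u v" "conn E v w"
  shows "gd E u w \<le> gd E u v + gd E v w"
proof -
  obtain xs where a: "walk E xs" "hd xs = u" "last xs = v" "length xs = Suc (gd E u v)"
    using gd_ex[OF assms(1)] by blast
  obtain ys where b: "walk E ys" "hd ys = v" "last ys = w" "length ys = Suc (gd E v w)"
    using gd_ex[OF assms(2)] by blast
  have "walk E (xs @ tl ys)" using walk_append_shared a b by metis
  moreover have "hd (xs @ tl ys) = u" using a by (cases xs) auto
  moreover have "last (xs @ tl ys) = w" using a b last_shared[of xs ys] by (cases xs; cases ys) auto
  ultimately have "gd E u w \<le> length (xs @ tl ys) - 1" by (rule gd_le)
  then show ?thesis using a(4) b(4) by simp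
qed

lemma conn_sym:
  assumes sym: "\<And>u v. E u v \<Longrightarrow> E v u"
  shows "conn E u v \<Longrightarrow> conn E v u"
  unfolding conn_def
proof (elim exE conjE)
  fix xs assume a: "walk E xs" "hd xs = u" "last xs = v"
  then have "xs \<noteq> []" by auto
  then show "\<exists>xs. walk E xs \<and> hd xs = v \<and> last xs = u"
    using a walk_rev[OF sym a(1)] by (intro exI[of _ "rev xs"]) (simp add: hd_rev last_rev)
qed

lemma gd_sym:
  assumes sym: "\<And>u v. E u v \<Longrightarrow> E v u"
  shows "gd E u v = gd E v u"
proof (cases "conn E u v")
  case True
  have *: "gd E a b \<le> gd E b a" if c: "conn E b a" for a b
  proof -
    obtain xs where a: "walk E xs" "hd xs = b" "last xs = a" "length xs = Suc (gd E b a)"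
      using gd_ex[OF c] by blast
    then have "xs \<noteq> []" by auto
    have "gd E a b \<le> length (rev xs) - 1"
      using a \<open>xs \<noteq> []\<close> by (intro gd_le walk_rev[OF sym]) (auto simp: hd_rev last_rev)
    then show ?thesis using a by simp
  qed
  have "conn E v u" using True conn_sym[where E=E] sym by blast
  then show ?thesis using *[of u v] *[of v u] True by simp
next
  case False
  then have F2: "\<not> conn E v u" using conn_sym[where E=E] sym by blast
  have "(\<lambda>n. \<exists>xs. walk E xs \<and> hd xs = u \<and> last xs = v \<and> length xs = Suc n) = (\<lambda>n. False)"
    using False unfolding conn_def by blast
  moreover have "(\<lambda>n. \<exists>xs. walk E xs \<and> hd xs = v \<and> last xs = u \<and> length xs = Suc n) = (\<lambda>n. False)"
    using F2 unfolding conn_def by blast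
  ultimately show ?thesis unfolding gd_def by simp
qed

lemma gd_zero:
  assumes "conn E u v" "gd E u v = 0" shows "u = v"
proof -
  obtain xs where a: "walk E xs" "hd xs = u" "last xs = v" "length xs = Suc (gd E u v)"
    using gd_ex[OF assms(1)] by blast
  then obtain x where "xs = [x]" using assms(2) by (cases xs) auto
  then show ?thesis using a by simp
qed


locale rooted =
  fixes V :: "'v set" and E :: "'v \<Rightarrow> 'v \<Rightarrow> bool" and lev :: "'v \<Rightarrow> nat"
    and par :: "'v \<Rightarrow> 'v" and r :: 'v
  assumes r_in: "r \<in> V" and lev_r: "lev r = 0"
    and lev0: "\<And>v. v \<in> V \<Longrightarrow> lev v = 0 \<Longrightarrow> v = r"
    and par_in: "\<And>v. v \<in> V \<Longrightarrow> v \<noteq> r \<Longrightarrow> par v \<in> V"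
    and lev_par: "\<And>v. v \<in> V \<Longrightarrow> v \<noteq> r \<Longrightarrow> Suc (lev (par v)) = lev v"
    and E_iff: "\<And>u v. E u v \<longleftrightarrow> (u \<in> V \<and> v \<in> V \<and> ((v \<noteq> r \<and> u = par v) \<or> (u \<noteq> r \<and> v = par u)))"
begin

lemma E_sym: "E u v \<Longrightarrow> E v u"
  using E_iff by blast

lemma E_par: "v \<in> V \<Longrightarrow> v \<noteq> r \<Longrightarrow> E v (par v)"
  using E_iff par_in by blast

lemma E_cases:
  assumes "E u v"
  shows "u \<in> V \<and> v \<in> V \<and> ((v \<noteq> r \<and> u = par v \<and> lev v = Suc (lev u)) \<or> (u \<noteq> r \<and> v = par u \<and> lev u = Suc (lev v)))"
  using assms E_iff lev_par by metis

lemma E_lower_is_par: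
  assumes "E u v" "lev u < lev v" shows "u = par v" "v \<noteq> r"
  using E_cases[OF assms(1)] assms(2) by auto

lemma iter_par:
  assumes "v \<in> V" "i \<le> lev v"
  shows "(par ^^ i) v \<in> V \<and> lev ((par ^^ i) v) = lev v - i"
  using assms(2)
proof (induction i)
  case 0 then show ?case using assms(1) by simp
next
  case (Suc i)
  let ?w = "(par ^^ i) v"
  have w: "?w \<in> V" "lev ?w = lev v - i" using Suc by auto
  have "?w \<noteq> r" using w Suc.prems lev_r by auto
  then show ?case using w par_in lev_par[of ?w] by (auto simp: Suc.prems)
qed

definition anc :: "nat \<Rightarrow> 'v \<Rightarrow> 'v" where
  "anc k v = (par ^^ (lev v - k)) v"

lemma anc_in: "v \<in> V \<Longrightarrow> k \<le> lev v \<Longrightarrow> anc k v \<in> V \<and> lev (anc k v) = k"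
  unfolding anc_def using iter_par[of v "lev v - k"] by auto

lemma anc_self[simp]: "anc (lev v) v = v"
  by (simp add: anc_def)

lemma anc_anc:
  assumes "v \<in> V" "j \<le> k" "k \<le> lev v"
  shows "anc j (anc k v) = anc j v"
proof -
  have l: "lev (anc k v) = k" using anc_in assms by blast
  have "anc j (anc k v) = (par ^^ (k - j)) (anc k v)"
    using l by (simp add: anc_def[of j "anc k v"])
  also have "\<dots> = (par ^^ (k - j)) ((par ^^ (lev v - k)) v)" by (simp add: anc_def)
  also have "\<dots> = (par ^^ (k - j + (lev v - k))) v" by (simp add: funpow_add)
  also have "k - j + (lev v - k) = lev v - j" using assms by simp
  finally show ?thesis by (simp add: anc_def)
qed

lemma anc_zero: "v \<in> V \<Longrightarrow> anc 0 v = r"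
  using anc_in[of v 0] lev0 by auto

lemma anc_par:
  assumes "v \<in> V" "v \<noteq> r" "k \<le> lev (par v)"
  shows "anc k (par v) = anc k v"
proof -
  have l: "lev v = Suc (lev (par v))" using lev_par assms by simp
  have "anc k v = (par ^^ (Suc (lev (par v) - k))) v" unfolding anc_def l
    using assms(3) by (simp add: Suc_diff_le)
  also have "\<dots> = (par ^^ (lev (par v) - k)) (par v)" by (simp only: funpow_Suc_right comp_def)
  finally show ?thesis by (simp add: anc_def)
qed

definition meet :: "'v \<Rightarrow> 'v \<Rightarrow> nat" where
  "meet a b = (GREATEST k. k \<le> min (lev a) (lev b) \<and> anc k a = anc k b)"

lemma meet_prop:
  assumes "a \<in> V" "b \<in> V"
  shows "meet a b \<le> min (lev a) (lev b) \<and> anc (meet a b) a = anc (meet a b) b"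
proof -
  have "0 \<le> min (lev a) (lev b) \<and> anc 0 a = anc 0 b" using anc_zero assms by simp
  then show ?thesis unfolding meet_def
    by (rule GreatestI_nat[where b = "min (lev a) (lev b)"]) auto
qed

lemma meet_ge:
  assumes "k \<le> min (lev a) (lev b)" "anc k a = anc k b"
  shows "k \<le> meet a b"
  unfolding meet_def using assms by (intro Greatest_le_nat[where b = "min (lev a) (lev b)"]) auto

lemma anc_eq_below:
  assumes "a \<in> V" "b \<in> V" "j \<le> meet a b"
  shows "anc j a = anc j b"
proof -
  have m: "meet a b \<le> min (lev a) (lev b)" "anc (meet a b) a = anc (meet a b) b"
    using meet_prop assms by auto
  have "anc j a = anc j (anc (meet a b) a)" using anc_anc[of a j "meet a b"] assms m by simp
  also have "\<dots> = anc j (anc (meet a b) b)" using m by simp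
  also have "\<dots> = anc j b" using anc_anc[of b j "meet a b"] assms m by simp
  finally show ?thesis .
qed

lemma meet_sym: "meet a b = meet b a"
  unfolding meet_def by (metis min.commute)

lemma meet_ultra:
  assumes "a \<in> V" "b \<in> V" "c \<in> V"
  shows "min (meet a b) (meet b c) \<le> meet a c"
proof -
  let ?k = "min (meet a b) (meet b c)"
  have "anc ?k a = anc ?k b" using anc_eq_below assms by simp
  moreover have "anc ?k b = anc ?k c" using anc_eq_below assms by simp
  moreover have "?k \<le> min (lev a) (lev c)" using meet_prop assms by fastforce
  ultimately show ?thesis using meet_ge by metis
qed

definition upw :: "'v \<Rightarrow> nat \<Rightarrow> 'v list" where
  "upw v n = map (\<lambda>i. (par ^^ i) v) [0..<Suc n]"

lemma upw_walk:
  assumes "v \<in> V" "n \<le> lev v"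
  shows "walk E (upw v n)" "hd (upw v n) = v" "last (upw v n) = anc (lev v - n) v"
    "length (upw v n) = Suc n"
proof -
  show "walk E (upw v n)" unfolding walk_def upw_def
  proof (intro conjI allI impI)
    fix i assume i: "Suc i < length (map (\<lambda>i. (par ^^ i) v) [0..<Suc n])"
    then have i': "i < n" by simp
    let ?w = "(par ^^ i) v"
    have w: "?w \<in> V" "lev ?w = lev v - i" using iter_par assms i' by auto
    have "?w \<noteq> r" using w i' assms lev_r by auto
    then have "E ?w (par ?w)" using E_par w by blast
    then show "E (map (\<lambda>i. (par ^^ i) v) [0..<Suc n] ! i) (map (\<lambda>i. (par ^^ i) v) [0..<Suc n] ! Suc i)"
      using i' by (simp del: upt_Suc add: nth_map_upt)
  qed (simp)
  show "hd (upw v n) = v" unfolding upw_def by (simp del: upt_Suc add: hd_map upt_rec)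
  show "last (upw v n) = anc (lev v - n) v" unfolding upw_def anc_def
    using assms by (simp add: last_map)
  show "length (upw v n) = Suc n" unfolding upw_def by simp
qed

lemma walk_to_root:
  assumes "v \<in> V" shows "conn E v r"
proof -
  have "last (upw v (lev v)) = r" using upw_walk[OF assms, of "lev v"] anc_zero assms by simp
  then show ?thesis unfolding conn_def using upw_walk[OF assms, of "lev v"] by blast
qed

lemma conn_all: "a \<in> V \<Longrightarrow> b \<in> V \<Longrightarrow> conn E a b"
  using walk_to_root conn_trans conn_sym[where E=E] E_sym by metis

lemma gd_upper:
  assumes "a \<in> V" "b \<in> V"
  shows "gd E a b \<le> lev a + lev b - 2 * meet a b"
proof -
  let ?m = "meet a b"
  have m: "?m \<le> lev a" "?m \<le> lev b" "anc ?m a = anc ?m b" using meet_prop assms by auto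
  let ?xs = "upw a (lev a - ?m)" and ?ys = "rev (upw b (lev b - ?m))"
  have xs: "walk E ?xs" "hd ?xs = a" "last ?xs = anc ?m a" "length ?xs = Suc (lev a - ?m)"
    using upw_walk[OF assms(1), of "lev a - ?m"] m by auto
  have yb: "walk E (upw b (lev b - ?m))" "hd (upw b (lev b - ?m)) = b"
     "last (upw b (lev b - ?m)) = anc ?m b" "length (upw b (lev b - ?m)) = Suc (lev b - ?m)"
    using upw_walk[OF assms(2), of "lev b - ?m"] m by auto
  have ne: "upw b (lev b - ?m) \<noteq> []" using yb(4) by auto
  have ys: "walk E ?ys" "hd ?ys = anc ?m b" "last ?ys = b" "length ?ys = Suc (lev b - ?m)"
    using yb walk_rev[OF E_sym] ne by (auto simp: hd_rev last_rev)
  have w: "walk E (?xs @ tl ?ys)" using walk_append_shared xs ys m by metis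
  have h: "hd (?xs @ tl ?ys) = a" using xs by (cases ?xs) auto
  have l: "last (?xs @ tl ?ys) = b"
  proof (cases "tl ?ys = []")
    case True
    then have "?ys = [hd ?ys]" using ys(4) by (cases ?ys) auto
    then have "b = anc ?m b" using ys by (metis last_ConsL)
    then show ?thesis using True xs m by simp
  next
    case False
    then show ?thesis using ys by (metis last_appendR last_tl)
  qed
  have "gd E a b \<le> length (?xs @ tl ?ys) - 1" by (rule gd_le[OF w h l])
  then show ?thesis using xs(4) ys(4) m by simp
qed

lemma lev_lip:
  assumes "walk E xs" "i + d < length xs"
  shows "lev (xs ! i) \<le> lev (xs ! (i + d)) + d \<and> lev (xs ! (i + d)) \<le> lev (xs ! i) + d"
  using assms(2)
proof (induction d)
  case 0 then show ?case by simp
next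
  case (Suc d)
  have e: "E (xs ! (i + d)) (xs ! Suc (i + d))" using walk_nth[OF assms(1)] Suc.prems by simp
  have "lev (xs ! (i + d)) = Suc (lev (xs ! Suc (i + d))) \<or> lev (xs ! Suc (i + d)) = Suc (lev (xs ! (i + d)))"
    using E_cases[OF e] by auto
  then show ?case using Suc by auto
qed

lemma walk_inV:
  assumes "walk E xs" "last xs \<in> V" "x \<in> set xs"
  shows "x \<in> V"
proof -
  obtain i where i: "i < length xs" "xs ! i = x" using assms(3) by (auto simp: in_set_conv_nth)
  show ?thesis
  proof (cases "Suc i < length xs")
    case True then show ?thesis using walk_nth[OF assms(1) True] E_cases i by blast
  next
    case False
    then have "i = length xs - 1" using i by auto
    moreover have "xs \<noteq> []" using i by auto
    ultimately have "x = last xs" using i by (simp add: last_conv_nth)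
    then show ?thesis using assms(2) by simp
  qed
qed

lemma gd_lower:
  assumes "walk E xs" "hd xs = a" "last xs = b" "b \<in> V"
  shows "lev a + lev b - 2 * meet a b \<le> length xs - 1"
proof -
  have ne: "xs \<noteq> []" using assms(1) by auto
  let ?n = "length xs"
  have inV: "\<And>x. x \<in> set xs \<Longrightarrow> x \<in> V" using walk_inV assms by blast
  have a0: "xs ! 0 = a" using assms(2) ne by (simp add: hd_conv_nth)
  have bn: "xs ! (?n - 1) = b" using assms(3) ne by (simp add: last_conv_nth)
  have aV: "a \<in> V" using inV assms(2) ne by auto
  define j where "j = Min (lev ` set xs)"
  have fin: "finite (lev ` set xs)" "lev ` set xs \<noteq> {}" using ne by auto
  have jle: "\<And>x. x \<in> set xs \<Longrightarrow> j \<le> lev x" unfolding j_def using fin by simp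
  obtain k where k: "k < ?n" "lev (xs ! k) = j"
    using Min_in[OF fin] unfolding j_def by (auto simp: in_set_conv_nth)
  have anc_const: "anc j (xs ! i) = anc j a" if "i < ?n" for i
    using that
  proof (induction i)
    case 0 then show ?case using a0 by simp
  next
    case (Suc i)
    have e: "E (xs ! i) (xs ! Suc i)" using walk_nth[OF assms(1)] Suc.prems by simp
    have ji: "j \<le> lev (xs ! i)" "j \<le> lev (xs ! Suc i)" using jle Suc.prems by auto
    have "anc j (xs ! Suc i) = anc j (xs ! i)"
      using E_cases[OF e]
    proof (elim conjE disjE)
      assume h: "xs ! Suc i \<noteq> r" "xs ! i = par (xs ! Suc i)" "xs ! Suc i \<in> V"
      then show ?thesis using anc_par[of "xs ! Suc i" j] ji by simp
    next
      assume h: "xs ! i \<noteq> r" "xs ! Suc i = par (xs ! i)" "xs ! i \<in> V"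
      then show ?thesis using anc_par[of "xs ! i" j] ji by simp
    qed
    then show ?case using Suc by simp
  qed
  have "anc j b = anc j a" using anc_const[of "?n - 1"] bn ne by simp
  moreover have "j \<le> lev a" "j \<le> lev b" using jle ne assms(2,3) by auto
  ultimately have jm: "j \<le> meet a b" using meet_ge by (metis min.bounded_iff)
  have l1: "lev a \<le> j + k" using lev_lip[OF assms(1), of 0 k] k a0 by simp
  have l2: "lev b \<le> j + (?n - 1 - k)" using lev_lip[OF assms(1), of k "?n - 1 - k"] k bn by simp
  show ?thesis using l1 l2 jm k(1) by linarith
qed

lemma gd_formula:
  assumes "a \<in> V" "b \<in> V"
  shows "gd E a b = lev a + lev b - 2 * meet a b"
proof -
  obtain xs where xs: "walk E xs" "hd xs = a" "last xs = b" "length xs = Suc (gd E a b)"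
    using gd_ex[OF conn_all[OF assms]] by blast
  show ?thesis using gd_lower[OF xs(1-3) assms(2)] xs(4) gd_upper[OF assms] by simp
qed

lemma meet_le: "a \<in> V \<Longrightarrow> b \<in> V \<Longrightarrow> 2 * meet a b \<le> lev a + lev b"
  using meet_prop by fastforce

lemma is_tree: "is_tree V E"
  unfolding is_tree_def
proof (intro conjI allI impI ballI)
  show "V \<noteq> {}" using r_in by auto
next
  fix u v assume "E u v" then show "u \<in> V" "v \<in> V" "u \<noteq> v" "E v u"
    using E_cases E_sym by fastforce+
next
  fix u v assume "u \<in> V" "v \<in> V"
  then show "\<exists>xs. walk E xs \<and> hd xs = u \<and> last xs = v" using conn_all unfolding conn_def by blast
next
  show "\<not> (\<exists>xs. walk E xs \<and> 3 \<le> length xs \<and> distinct xs \<and> E (last xs) (hd xs))"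
  proof
    assume "\<exists>xs. walk E xs \<and> 3 \<le> length xs \<and> distinct xs \<and> E (last xs) (hd xs)"
    then obtain xs where xs: "walk E xs" "3 \<le> length xs" "distinct xs" "E (last xs) (hd xs)" by blast
    let ?n = "length xs"
    have ne: "xs \<noteq> []" using xs by auto
    have cyc: "E (xs ! i) (xs ! (if Suc i < ?n then Suc i else 0))" if "i < ?n" for i
    proof (cases "Suc i < ?n")
      case True then show ?thesis using walk_nth[OF xs(1)] by simp
    next
      case False
      then have "i = ?n - 1" using that by simp
      then show ?thesis using xs(4) False ne by (simp add: last_conv_nth hd_conv_nth)
    qed
    have fin: "finite (lev ` set xs)" "lev ` set xs \<noteq> {}" using ne by auto
    obtain k where k: "k < ?n" "lev (xs ! k) = Max (lev ` set xs)"
      using Max_in[OF fin] by (auto simp: in_set_conv_nth)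
    have kmax: "\<And>i. i < ?n \<Longrightarrow> lev (xs ! i) \<le> lev (xs ! k)"
      using k fin by simp
    define p where "p = (if k = 0 then ?n - 1 else k - 1)"
    define q where "q = (if Suc k < ?n then Suc k else 0)"
    have p: "p < ?n" "(if Suc p < ?n then Suc p else 0) = k" using k xs(2) unfolding p_def by auto
    have q: "q < ?n" using k unfolding q_def by auto
    have pq: "p \<noteq> q" using k xs(2) unfolding p_def q_def by auto
    have e1: "E (xs ! p) (xs ! k)" using cyc[OF p(1)] p(2) by simp
    have e2: "E (xs ! q) (xs ! k)" using cyc[OF k(1)] E_sym unfolding q_def by simp
    have l1: "lev (xs ! p) < lev (xs ! k)" using E_cases[OF e1] kmax[OF p(1)] by auto
    have l2: "lev (xs ! q) < lev (xs ! k)" using E_cases[OF e2] kmax[OF q] by auto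
    have "xs ! p = par (xs ! k)" using E_lower_is_par[OF e1 l1] by simp
    moreover have "xs ! q = par (xs ! k)" using E_lower_is_par[OF e2 l2] by simp
    ultimately have "xs ! p = xs ! q" by simp
    then show False using pq p(1) q xs(3) nth_eq_iff_index_eq by blast
  qed
qed

end


locale tree_root =
  fixes V :: "'v set" and E :: "'v \<Rightarrow> 'v \<Rightarrow> bool" and r :: 'v
  assumes tree: "is_tree V E" and rV: "r \<in> V"
begin

lemma tree_parts:
  "\<forall>u v. E u v \<longrightarrow> u \<in> V \<and> v \<in> V \<and> u \<noteq> v \<and> E v u"
  "\<forall>u\<in>V. \<forall>v\<in>V. \<exists>xs. walk E xs \<and> hd xs = u \<and> last xs = v"
  "\<not> (\<exists>xs. walk E xs \<and> length xs \<ge> 3 \<and> distinct xs \<and> E (last xs) (hd xs))"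
  using tree unfolding is_tree_def by simp_all

lemma E_V: "E u v \<Longrightarrow> u \<in> V \<and> v \<in> V \<and> u \<noteq> v \<and> E v u"
  using tree_parts(1) by simp

lemma Esym: "E u v \<Longrightarrow> E v u" using E_V by blast

lemma conn_V: "u \<in> V \<Longrightarrow> v \<in> V \<Longrightarrow> conn E u v"
  using tree_parts(2) unfolding conn_def by simp

lemma acyc: "walk E xs \<Longrightarrow> 3 \<le> length xs \<Longrightarrow> distinct xs \<Longrightarrow> E (last xs) (hd xs) \<Longrightarrow> False"
  using tree_parts(3) by blast

definition hlev :: "'v \<Rightarrow> nat" where "hlev v = gd E r v"

lemma hlev_tri: "u \<in> V \<Longrightarrow> v \<in> V \<Longrightarrow> hlev v \<le> hlev u + gd E u v"
  unfolding hlev_def by (rule gd_triangle[OF conn_V[OF rV] conn_V])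

lemma hlev_edge: "E u v \<Longrightarrow> hlev v \<le> Suc (hlev u)"
proof -
  assume e: "E u v"
  then have "u \<in> V" "v \<in> V" using E_V by auto
  then have "hlev v \<le> hlev u + gd E u v" by (rule hlev_tri)
  moreover have "gd E u v \<le> 1" using gd_edge[of E u v, OF e] .
  ultimately show ?thesis by simp
qed

definition sw :: "'v list \<Rightarrow> bool" where
  "sw P \<longleftrightarrow> walk E P \<and> hd P = r \<and> length P = Suc (hlev (last P))"

lemma walk_last_V: "walk E P \<Longrightarrow> hd P \<in> V \<Longrightarrow> x \<in> set P \<Longrightarrow> x \<in> V"
proof -
  assume w: "walk E P" and h: "hd P \<in> V" and x: "x \<in> set P"
  obtain i where i: "i < length P" "P ! i = x" using x by (auto simp: in_set_conv_nth)
  show "x \<in> V"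
  proof (cases i)
    case 0 then show ?thesis using h i w by (cases P) auto
  next
    case (Suc j)
    then have "E (P ! j) (P ! Suc j)" using walk_nth[OF w, of j] i by simp
    then show ?thesis using E_V i Suc by auto
  qed
qed

lemma sw_lev:
  assumes "sw P" "k < length P"
  shows "hlev (P ! k) = k"
proof -
  have w: "walk E P" and h: "hd P = r" and l: "length P = Suc (hlev (last P))" using assms(1) sw_def by auto
  have ne: "P \<noteq> []" using w by auto
  have PkV: "P ! k \<in> V" using walk_last_V[OF w] h rV assms(2) by simp
  have lastV: "last P \<in> V" using walk_last_V[OF w] h rV ne by simp
  have "hlev (P ! k) \<le> k"
  proof -
    have "walk E (take (Suc k) P)" using walk_take[OF w] by simp
    moreover have "hd (take (Suc k) P) = r" using h ne by (cases P) auto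
    moreover have "last (take (Suc k) P) = P ! k" using assms(2) by (simp add: take_Suc_conv_app_nth)
    ultimately have "gd E r (P ! k) \<le> length (take (Suc k) P) - 1" by (rule gd_le)
    then show ?thesis unfolding hlev_def using assms(2) by simp
  qed
  moreover have "hlev (last P) \<le> hlev (P ! k) + (length P - 1 - k)"
  proof -
    have "walk E (drop k P)" using walk_drop[OF w assms(2)] .
    moreover have "hd (drop k P) = P ! k" using assms(2) by (simp add: hd_drop_conv_nth)
    moreover have "last (drop k P) = last P" using assms(2) by simp
    ultimately have "gd E (P ! k) (last P) \<le> length (drop k P) - 1" by (rule gd_le)
    then show ?thesis using hlev_tri[OF PkV lastV] by simp
  qed
  ultimately show ?thesis using l assms(2) by simp
qed

lemma sw_ex:
  assumes "v \<in> V"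
  obtains P where "sw P" "last P = v"
proof -
  obtain P where P: "walk E P" "hd P = r" "last P = v" "length P = Suc (gd E r v)"
    using gd_ex[OF conn_V[OF rV assms]] by blast
  then show ?thesis using that unfolding sw_def hlev_def by auto
qed

lemma sw_distinct: assumes s: "sw P" shows "distinct P"
  unfolding distinct_conv_nth
proof (intro allI impI)
  fix i j assume "i < length P" "j < length P" "i \<noteq> j"
  then show "P ! i \<noteq> P ! j" using sw_lev[OF s, of i] sw_lev[OF s, of j] by auto
qed

lemma in_set_drop_nth: "x \<in> set (drop i P) \<Longrightarrow> \<exists>k. i \<le> k \<and> k < length P \<and> x = P ! k"
proof -
  assume "x \<in> set (drop i P)"
  then obtain j where j: "j < length (drop i P)" "drop i P ! j = x" by (auto simp: in_set_conv_nth)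
  then show ?thesis by (intro exI[of _ "i + j"]) auto
qed

lemma cycle_contra:
  assumes P: "sw P" and Q: "sw Q" and a: "last P = a" and b: "last Q = b"
    and lab: "hlev a = hlev b" and ab: "a \<noteq> b"
    and L: "walk E (a # L @ [b])" "distinct L" "\<forall>x\<in>set L. hlev x > hlev a"
  shows False
proof -
  let ?n = "hlev a"
  have lP: "length P = Suc ?n" using P a sw_def by auto
  have lQ: "length Q = Suc ?n" using Q b lab sw_def by auto
  have P0: "P ! 0 = r" using P lP unfolding sw_def by (cases P) auto
  have Q0: "Q ! 0 = r" using Q lQ unfolding sw_def by (cases Q) auto
  have "P \<noteq> []" "Q \<noteq> []" using lP lQ by auto
  then have Pn: "P ! ?n = a" and Qn: "Q ! ?n = b" using a b lP lQ by (simp_all add: last_conv_nth)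
  define i where "i = (GREATEST k. k \<le> ?n \<and> P ! k = Q ! k)"
  have ex: "0 \<le> ?n \<and> P ! 0 = Q ! 0" using P0 Q0 by simp
  have iall: "i \<le> ?n \<and> P ! i = Q ! i" unfolding i_def
    by (rule GreatestI_nat[where P = "\<lambda>k. k \<le> ?n \<and> P ! k = Q ! k" and k = 0 and b = ?n, OF ex]) simp
  then have i: "i \<le> ?n" "P ! i = Q ! i" by auto
  have imax: "k \<le> i" if "k \<le> ?n" "P ! k = Q ! k" for k
    unfolding i_def by (rule Greatest_le_nat[where b = ?n]) (use that in auto)
  have iln: "i < ?n" using i Pn Qn ab by (cases "i = ?n") auto
  let ?A = "drop i P" and ?B = "rev (drop (Suc i) Q)"
  have wP: "walk E P" and wQ: "walk E Q" using P Q sw_def by auto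
  have wA: "walk E ?A" using walk_drop[OF wP] iln lP by simp
  have hA: "hd ?A = P ! i" using iln lP by (simp add: hd_drop_conv_nth)
  have lA: "last ?A = a" using iln lP a by simp
  have dQ: "drop (Suc i) Q \<noteq> []" using iln lQ by simp
  have wB: "walk E ?B" using walk_rev[OF Esym walk_drop[OF wQ]] iln lQ by simp
  have hB: "hd ?B = b" using dQ iln lQ b by (simp add: hd_rev)
  have lB: "last ?B = Q ! Suc i" using dQ iln lQ by (simp add: last_rev hd_drop_conv_nth)
  have w1: "walk E ((a # L @ [b]) @ tl ?B)"
    using walk_append_shared[OF L(1) wB] hB by simp
  have eqB: "(a # L @ [b]) @ tl ?B = a # L @ ?B" using dQ hB by (cases ?B) auto
  have w1': "walk E (a # L @ ?B)" using w1 eqB by simp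
  have w2: "walk E (?A @ tl (a # L @ ?B))"
    using walk_append_shared[OF wA w1'] lA by simp
  define C where "C = ?A @ L @ ?B"
  have wC: "walk E C" using w2 unfolding C_def by simp
  have hC: "hd C = Q ! i" using hA i iln lP unfolding C_def by (cases ?A) auto
  have lC: "last C = Q ! Suc i" using lB dQ unfolding C_def by simp
  have eC: "E (last C) (hd C)" using hC lC walk_nth[OF wQ, of i] iln lQ Esym by simp
  have lenC: "3 \<le> length C" unfolding C_def using iln lP lQ by simp
  have swl: "\<And>x. x \<in> set ?A \<Longrightarrow> \<exists>k. i \<le> k \<and> k \<le> ?n \<and> x = P ! k"
    using in_set_drop_nth lP by fastforce
  have swq: "\<And>x. x \<in> set ?B \<Longrightarrow> \<exists>k. i < k \<and> k \<le> ?n \<and> x = Q ! k"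
    using in_set_drop_nth lQ by (fastforce simp: Suc_le_eq)
  have dA: "distinct ?A" using sw_distinct[OF P] by simp
  have dB: "distinct ?B" using sw_distinct[OF Q] by simp
  have AL: "set ?A \<inter> set L = {}"
  proof (rule ccontr)
    assume "set ?A \<inter> set L \<noteq> {}"
    then obtain x where "x \<in> set ?A" "x \<in> set L" by blast
    then obtain k where "k \<le> ?n" "x = P ! k" "hlev x > ?n" using swl L(3) by blast
    then show False using sw_lev[OF P, of k] lP by simp
  qed
  have LB: "set L \<inter> set ?B = {}"
  proof (rule ccontr)
    assume "set L \<inter> set ?B \<noteq> {}"
    then obtain x where "x \<in> set ?B" "x \<in> set L" by blast
    then obtain k where "k \<le> ?n" "x = Q ! k" "hlev x > ?n" using swq L(3) by blast
    then show False using sw_lev[OF Q, of k] lQ by simp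
  qed
  have AB: "set ?A \<inter> set ?B = {}"
  proof (rule ccontr)
    assume "set ?A \<inter> set ?B \<noteq> {}"
    then obtain x where "x \<in> set ?A" "x \<in> set ?B" by blast
    then obtain k k' where k: "i \<le> k" "k \<le> ?n" "x = P ! k" and k': "i < k'" "k' \<le> ?n" "x = Q ! k'"
      using swl swq by blast
    have "k = k'" using sw_lev[OF P, of k] sw_lev[OF Q, of k'] k k' lP lQ by simp
    then show False using imax[of k] k k' by simp
  qed
  have "distinct C" unfolding C_def using dA dB L(2) AL LB AB by auto
  then show False using acyc[OF wC lenC _ eC] by simp
qed

lemma edge_lev_ne:
  assumes "E a b" shows "hlev a \<noteq> hlev b"
proof
  assume eq: "hlev a = hlev b"
  have V: "a \<in> V" "b \<in> V" "a \<noteq> b" using E_V assms by auto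
  obtain P where P: "sw P" "last P = a" using sw_ex V by blast
  obtain Q where Q: "sw Q" "last Q = b" using sw_ex V by blast
  show False using cycle_contra[OF P(1) Q(1) P(2) Q(2) eq V(3), of "[]"] assms by simp
qed

lemma par_unique:
  assumes "E a v" "E b v" "Suc (hlev a) = hlev v" "Suc (hlev b) = hlev v"
  shows "a = b"
proof (rule ccontr)
  assume ab: "a \<noteq> b"
  have V: "a \<in> V" "b \<in> V" using E_V assms by auto
  obtain P where P: "sw P" "last P = a" using sw_ex V by blast
  obtain Q where Q: "sw Q" "last Q = b" using sw_ex V by blast
  have "walk E (a # [v] @ [b])" using assms Esym by simp
  then show False using cycle_contra[OF P(1) Q(1) P(2) Q(2) _ ab, of "[v]"] assms by simp
qed

lemma par_ex:
  assumes "v \<in> V" "v \<noteq> r"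
  shows "\<exists>u. E u v \<and> Suc (hlev u) = hlev v"
proof -
  obtain P where P: "sw P" "last P = v" using sw_ex assms by blast
  have lP: "length P = Suc (hlev v)" using P sw_def by auto
  have "hlev v \<noteq> 0" using gd_zero[OF conn_V[OF rV assms(1)]] assms unfolding hlev_def by auto
  then obtain m where m: "hlev v = Suc m" by (cases "hlev v") auto
  have e: "E (P ! m) (P ! Suc m)" using walk_nth[of E P m] P lP m sw_def by simp
  have "P \<noteq> []" using lP by auto
  then have "P ! Suc m = v" using P(2) lP m by (simp add: last_conv_nth)
  moreover have "hlev (P ! m) = m" using sw_lev[OF P(1)] lP m by simp
  ultimately show ?thesis using e m by auto
qed

definition hpar :: "'v \<Rightarrow> 'v" where "hpar v = (SOME u. E u v \<and> Suc (hlev u) = hlev v)"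

lemma hpar: "v \<in> V \<Longrightarrow> v \<noteq> r \<Longrightarrow> E (hpar v) v \<and> Suc (hlev (hpar v)) = hlev v"
  unfolding hpar_def using par_ex by (rule someI_ex)

lemma hlev_r: "hlev r = 0" unfolding hlev_def by simp

lemma rooted: "rooted V E hlev hpar r"
proof
  show "r \<in> V" by (rule rV)
  show "hlev r = 0" by (rule hlev_r)
  show "\<And>v. v \<in> V \<Longrightarrow> hlev v = 0 \<Longrightarrow> v = r"
    using gd_zero conn_V rV unfolding hlev_def by metis
  show "\<And>v. v \<in> V \<Longrightarrow> v \<noteq> r \<Longrightarrow> hpar v \<in> V" using hpar E_V by blast
  show "\<And>v. v \<in> V \<Longrightarrow> v \<noteq> r \<Longrightarrow> Suc (hlev (hpar v)) = hlev v" using hpar by blast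
  fix u v
  show "E u v \<longleftrightarrow> (u \<in> V \<and> v \<in> V \<and> ((v \<noteq> r \<and> u = hpar v) \<or> (u \<noteq> r \<and> v = hpar u)))"
  proof
    assume e: "E u v"
    have V: "u \<in> V" "v \<in> V" using E_V e by auto
    have "hlev u \<noteq> hlev v" using edge_lev_ne e by simp
    moreover have "hlev v \<le> Suc (hlev u)" "hlev u \<le> Suc (hlev v)" using hlev_edge e Esym by blast+
    ultimately have "Suc (hlev u) = hlev v \<or> Suc (hlev v) = hlev u" by linarith
    then show "u \<in> V \<and> v \<in> V \<and> ((v \<noteq> r \<and> u = hpar v) \<or> (u \<noteq> r \<and> v = hpar u))"
    proof
      assume h: "Suc (hlev u) = hlev v"
      then have "v \<noteq> r" using hlev_r by auto
      then have "u = hpar v" using par_unique[OF e, of "hpar v"] hpar V h by auto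
      then show ?thesis using V \<open>v \<noteq> r\<close> by simp
    next
      assume h: "Suc (hlev v) = hlev u"
      then have "u \<noteq> r" using hlev_r by auto
      then have "v = hpar u" using par_unique[OF Esym[OF e], of "hpar u"] hpar V h by auto
      then show ?thesis using V \<open>u \<noteq> r\<close> by simp
    qed
  next
    assume "u \<in> V \<and> v \<in> V \<and> ((v \<noteq> r \<and> u = hpar v) \<or> (u \<noteq> r \<and> v = hpar u))"
    then show "E u v" using hpar Esym by blast
  qed
qed

end

definition gp :: "('v \<Rightarrow> 'v \<Rightarrow> real) \<Rightarrow> 'v \<Rightarrow> 'v \<Rightarrow> 'v \<Rightarrow> real" where
  "gp d q a b = (d q a + d q b - d a b) / 2"

lemma ultra4_core:
  fixes mqa mqb mqc mab mbc mac :: real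
  assumes abc1: "mab \<le> mac \<or> mbc \<le> mac"
    and qab1: "mqa \<le> mqb \<or> mab \<le> mqb"
    and qac2: "mqa \<le> mac \<or> mqc \<le> mac"
    and qbc3: "mbc \<le> mqb \<or> mqc \<le> mqb"
  shows "mqc + mab \<le> mqb + mac \<or> mqa + mbc \<le> mqb + mac"
proof (cases "mab \<le> mac \<and> mqc \<le> mqb")
  case True then show ?thesis by linarith
next
  case nA: False
  show ?thesis
  proof (cases "mbc \<le> mac \<and> mqa \<le> mqb")
    case True then show ?thesis by linarith
  next
    case nB: False
    show ?thesis
    proof (cases "mac < mab")
      case True
      then have "mbc \<le> mac" using abc1 by linarith
      then have "mqb < mqa" using nB by linarith
      then have "mab \<le> mqb" using qab1 by linarith
      then have "mqc \<le> mac" using qac2 \<open>mac < mab\<close> \<open>mqb < mqa\<close> by linarith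
      then show ?thesis using \<open>mab \<le> mqb\<close> by linarith
    next
      case False
      then have mab: "mab \<le> mac" by simp
      then have "mqb < mqc" using nA by linarith
      show ?thesis
      proof (cases "mac < mbc")
        case True
        then have "mbc \<le> mqb" using qbc3 \<open>mqb < mqc\<close> by linarith
        then have "mqa \<le> mac" using qac2 \<open>mac < mbc\<close> \<open>mqb < mqc\<close> by linarith
        then show ?thesis using \<open>mbc \<le> mqb\<close> by linarith
      next
        case False
        then have "mqb < mqa" using nB by linarith
        then have "mab \<le> mqb" using qab1 by linarith
        have "mbc \<le> mqb" using qbc3 \<open>mqb < mqc\<close> by linarith
        show ?thesis using qac2 \<open>mab \<le> mqb\<close> \<open>mbc \<le> mqb\<close> by linarith
      qed
    qed
  qed
qed

lemma ultra4:
  fixes mqa mqb mqc mab mbc mac l :: real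
  assumes "min mab mbc \<le> mac" "min mqa mab \<le> mqb" "min mqa mqc \<le> mac" "min mbc mqc \<le> mqb"
  shows "min (l - mqa - mqb + mab) (l - mqb - mqc + mbc) \<le> l - mqa - mqc + mac"
proof -
  have "mqc + mab \<le> mqb + mac \<or> mqa + mbc \<le> mqb + mac"
    by (rule ultra4_core) (use assms in \<open>auto simp: min_le_iff_disj\<close>)
  then show ?thesis by (auto simp: min_le_iff_disj)
qed


context tree_root begin

interpretation R: rooted V E hlev hpar r by (rule rooted)

lemma gdist_formula:
  assumes "a \<in> V" "b \<in> V"
  shows "gdist E a b = real (hlev a) + real (hlev b) - 2 * real (R.meet a b)"
  using R.gd_formula[OF assms] R.meet_le[OF assms] by (simp add: gdist_gd of_nat_diff)

lemma gp_hyp: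
  assumes "q \<in> V" "a \<in> V" "b \<in> V" "c \<in> V"
  shows "min (gp (gdist E) q a b) (gp (gdist E) q b c) \<le> gp (gdist E) q a c"
proof -
  let ?m = "\<lambda>x y. real (R.meet x y)"
  have g: "gp (gdist E) q x y = real (hlev q) - ?m q x - ?m q y + ?m x y" if "x \<in> V" "y \<in> V" for x y
    unfolding gp_def using gdist_formula that assms(1) by simp
  have u: "min (?m x y) (?m y z) \<le> ?m x z" if "x \<in> V" "y \<in> V" "z \<in> V" for x y z
    using R.meet_ultra[OF that] by linarith
  have s: "?m x y = ?m y x" for x y using R.meet_sym by simp
  show ?thesis unfolding g[OF assms(2,3)] g[OF assms(3,4)] g[OF assms(2,4)]
    by (rule ultra4) (use u[OF assms(2,3,4)] u[OF assms(1,2,3)] u[OF assms(2,1,4)] u[OF assms(3,4,1)] s in auto)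
qed

end

lemma tree_dist_approx:
  assumes conn: "\<And>x y. x \<in> V \<Longrightarrow> y \<in> V \<Longrightarrow> conn E x y"
    and EV: "\<And>x y. E x y \<Longrightarrow> x \<in> V \<and> y \<in> V"
    and Es: "\<And>x y. E x y \<Longrightarrow> E y x"
    and p: "(u, v, s) \<in> tree_points V E" and q: "(c, d, t) \<in> tree_points V E"
  shows "tree_dist E (u, v, s) (c, d, t) \<le> gdist E u c + 2"
    and "gdist E u c \<le> tree_dist E (u, v, s) (c, d, t) + 2"
proof -
  have ps: "u \<in> V" "v \<in> V" "0 \<le> s" "s \<le> 1" "gd E u v \<le> 1"
    using p EV gd_edge[of E u v] unfolding tree_points_def by auto
  have qs: "c \<in> V" "d \<in> V" "0 \<le> t" "t \<le> 1" "gd E c d \<le> 1"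
    using q EV gd_edge[of E c d] unfolding tree_points_def by auto
  define via where "via = min (min (s + gdist E u c + t) (s + gdist E u d + (1 - t)))
                      (min ((1 - s) + gdist E v c + t) ((1 - s) + gdist E v d + (1 - t)))"
  have td: "tree_dist E (u, v, s) (c, d, t) = (if (u,v) = (c,d) then min \<bar>s - t\<bar> via
           else if (u,v) = (d,c) then min \<bar>s - (1 - t)\<bar> via else via)"
    unfolding tree_dist_def via_def Let_def by simp
  have "via \<le> gdist E u c + 2" unfolding via_def using ps qs by linarith
  moreover have "tree_dist E (u, v, s) (c, d, t) \<le> via" unfolding td by auto
  ultimately show "tree_dist E (u, v, s) (c, d, t) \<le> gdist E u c + 2" by linarith
  have tri: "real (gd E x z) \<le> real (gd E x y) + real (gd E y z)" if "x \<in> V" "y \<in> V" "z \<in> V" for x y z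
    using gd_triangle[OF conn conn, of x y z] that by simp
  have sym: "gd E x y = gd E y x" for x y by (rule gd_sym) (rule Es)
  have dc: "gd E d c \<le> 1" using qs sym by simp
  have "gdist E u c \<le> via + 2" unfolding via_def gdist_gd
    using tri[of u d c] tri[of u v c] tri[of u v d] tri[of v d c] ps qs dc by (simp add: min_def; linarith)
  moreover have "(u,v) = (c,d) \<Longrightarrow> gdist E u c = 0" by (simp add: gdist_gd)
  moreover have "(u,v) = (d,c) \<Longrightarrow> gdist E u c \<le> 1" using ps by (simp add: gdist_gd)
  ultimately show "gdist E u c \<le> tree_dist E (u, v, s) (c, d, t) + 2" unfolding td
    by (auto simp: min_def)
qed


lemma list_switch:
  assumes "xs \<noteq> []" "\<not> P (hd xs)" "P (last xs)"
  shows "\<exists>i. Suc i < length xs \<and> \<not> P (xs ! i) \<and> P (xs ! Suc i)"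
  using assms
proof (induction xs)
  case Nil then show ?case by simp
next
  case (Cons x xs)
  show ?case
  proof (cases "xs = []")
    case True then show ?thesis using Cons.prems by simp
  next
    case False
    show ?thesis
    proof (cases "P (hd xs)")
      case True
      then show ?thesis using Cons.prems False by (intro exI[of _ 0]) (auto simp: hd_conv_nth)
    next
      case nP: False
      have "P (last xs)" using Cons.prems False by simp
      then obtain i where "Suc i < length xs" "\<not> P (xs ! i)" "P (xs ! Suc i)"
        using Cons.IH False nP by blast
      then show ?thesis by (intro exI[of _ "Suc i"]) simp
    qed
  qed
qed

definition isgeo :: "(real \<Rightarrow> 'a::metric_space) \<Rightarrow> 'a \<Rightarrow> 'a \<Rightarrow> bool" where
  "isgeo \<gamma> x y \<longleftrightarrow> \<gamma> 0 = x \<and> \<gamma> (dist x y) = y \<and>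
     (\<forall>s\<in>{0..dist x y}. \<forall>t\<in>{0..dist x y}. dist (\<gamma> s) (\<gamma> t) = \<bar>s - t\<bar>)"

lemma geo_ex: "geodesic_space TYPE('a::metric_space) \<Longrightarrow> \<exists>\<gamma>. isgeo \<gamma> (x::'a) y"
  unfolding geodesic_space_def isgeo_def by blast

definition gN :: "real \<Rightarrow> real \<Rightarrow> nat" where "gN a b = nat \<lceil>b - a\<rceil> + 1"

definition gch :: "(real \<Rightarrow> 'a) \<Rightarrow> real \<Rightarrow> real \<Rightarrow> 'a list" where
  "gch \<gamma> a b = map (\<lambda>i. \<gamma> (a + (b - a) * real i / real (gN a b))) [0..<Suc (gN a b)]"

lemma gN_pos: "0 < gN a b" by (simp add: gN_def)

lemma gN_ge: "b - a \<le> real (gN a b)"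
  unfolding gN_def by (smt (verit) of_nat_1 of_nat_add real_nat_ceiling_ge)

lemma gch_param:
  assumes "a \<le> b" "i \<le> gN a b"
  shows "a \<le> a + (b - a) * real i / real (gN a b) \<and> a + (b - a) * real i / real (gN a b) \<le> b"
proof -
  have N: "real (gN a b) > 0" using gN_pos by simp
  have q: "real i / real (gN a b) \<le> 1" "0 \<le> real i / real (gN a b)" using assms(2) N by simp_all
  have "(b - a) * (real i / real (gN a b)) \<le> (b - a) * 1"
    by (rule mult_left_mono) (use q assms(1) in auto)
  then have "(b - a) * real i / real (gN a b) \<le> b - a" by simp
  moreover have "0 \<le> (b - a) * real i / real (gN a b)" using assms(1) by simp
  ultimately show ?thesis by simp
qed

lemma gch_basic:
  shows "gch \<gamma> a b \<noteq> []" "hd (gch \<gamma> a b) = \<gamma> a" "last (gch \<gamma> a b) = \<gamma> b"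
proof -
  show "gch \<gamma> a b \<noteq> []" unfolding gch_def by simp
  show "hd (gch \<gamma> a b) = \<gamma> a" unfolding gch_def by (simp del: upt_Suc add: upt_rec)
  have N: "real (gN a b) \<noteq> 0" using gN_pos by simp
  show "last (gch \<gamma> a b) = \<gamma> b" unfolding gch_def using N by (simp add: last_map)
qed

lemma gch_set:
  assumes "a \<le> b" "z \<in> set (gch \<gamma> a b)"
  shows "\<exists>\<sigma>. a \<le> \<sigma> \<and> \<sigma> \<le> b \<and> z = \<gamma> \<sigma>"
proof -
  obtain i where i: "i < Suc (gN a b)" "z = \<gamma> (a + (b - a) * real i / real (gN a b))"
    using assms(2) unfolding gch_def by (auto simp del: upt_Suc)
  show ?thesis using gch_param[OF assms(1), of i] i by (intro exI[of _ "a + (b - a) * real i / real (gN a b)"]) auto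
qed

lemma gch_walk:
  assumes g: "isgeo \<gamma> x y" and ab: "0 \<le> a" "a \<le> b" "b \<le> dist x y"
  shows "walk (\<lambda>u v. dist u v \<le> 1) (gch \<gamma> a b)"
  unfolding walk_def
proof (intro conjI allI impI)
  show "gch \<gamma> a b \<noteq> []" by (rule gch_basic)
  fix i assume i: "Suc i < length (gch \<gamma> a b)"
  let ?N = "gN a b"
  have iN: "Suc i \<le> ?N" using i unfolding gch_def by simp
  let ?s = "a + (b - a) * real i / real ?N" and ?t = "a + (b - a) * real (Suc i) / real ?N"
  have s: "a \<le> ?s" "?s \<le> b" using gch_param[OF ab(2), of i] iN by auto
  have t: "a \<le> ?t" "?t \<le> b" using gch_param[OF ab(2), of "Suc i"] iN by auto
  have N: "real ?N > 0" using gN_pos by simp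
  have "?t - ?s = (b - a) / real ?N" using N by (simp add: field_simps)
  also have "\<dots> \<le> 1" using gN_ge[of b a] N by (simp add: divide_le_eq_1)
  finally have d1: "?t - ?s \<le> 1" .
  have "0 \<le> (b - a) / real ?N" using ab(2) N by simp
  then have "?s \<le> ?t" using \<open>?t - ?s = (b - a) / real ?N\<close> by linarith
  then have d: "\<bar>?s - ?t\<bar> \<le> 1" using d1 by simp
  have "dist (\<gamma> ?s) (\<gamma> ?t) = \<bar>?s - ?t\<bar>"
    using g s t ab unfolding isgeo_def by auto
  then show "dist (gch \<gamma> a b ! i) (gch \<gamma> a b ! Suc i) \<le> 1"
    using d i unfolding gch_def by (simp del: upt_Suc)
qed


lemma walk_map:
  assumes "walk R xs" "\<And>u v. R u v \<Longrightarrow> S (f u) (f v)"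
  shows "walk S (map f xs)"
  using assms unfolding walk_def by auto

locale hq =
  fixes V :: "'v set" and D :: "'v \<Rightarrow> 'v \<Rightarrow> real" and g :: "'a::metric_space \<Rightarrow> 'v"
    and K C1 :: real
  assumes gV: "\<And>x. g x \<in> V"
    and Dsym: "\<And>x y. x \<in> V \<Longrightarrow> y \<in> V \<Longrightarrow> D x y = D y x"
    and Dtri: "\<And>x y z. x \<in> V \<Longrightarrow> y \<in> V \<Longrightarrow> z \<in> V \<Longrightarrow> D x z \<le> D x y + D y z"
    and D0: "\<And>x. x \<in> V \<Longrightarrow> D x x = 0"
    and hyp: "\<And>q a b c. q \<in> V \<Longrightarrow> a \<in> V \<Longrightarrow> b \<in> V \<Longrightarrow> c \<in> V \<Longrightarrow>
              min (gp D q a b) (gp D q b c) \<le> gp D q a c"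
    and K1: "1 \<le> K" and C1: "0 \<le> C1"
    and lo: "\<And>x y. dist x y / K - C1 \<le> D (g x) (g y)"
    and up: "\<And>x y. D (g x) (g y) \<le> K * dist x y + C1"
begin

lemma lo': "dist x y \<le> K * (D (g x) (g y) + C1)"
proof -
  have "dist x y / K \<le> D (g x) (g y) + C1" using lo[of x y] by simp
  then show ?thesis using K1 by (simp add: divide_le_eq mult.commute)
qed

lemma gp_le: "q \<in> V \<Longrightarrow> a \<in> V \<Longrightarrow> b \<in> V \<Longrightarrow> gp D q a b \<le> D q a"
  unfolding gp_def using Dtri[of q a b] by simp

lemma gp_sym: "a \<in> V \<Longrightarrow> b \<in> V \<Longrightarrow> gp D q a b = gp D q b a"
  unfolding gp_def using Dsym[of a b] by simp

lemma gp_self: "q \<in> V \<Longrightarrow> a \<in> V \<Longrightarrow> gp D q a a = D q a"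
  unfolding gp_def using D0 by simp

lemma gp_base: "q \<in> V \<Longrightarrow> a \<in> V \<Longrightarrow> gp D q q a = 0"
  unfolding gp_def using D0 Dsym by simp

lemma CH:
  assumes w: "walk (\<lambda>u v. D u v \<le> J) ps" and sV: "set ps \<subseteq> V" and qV: "q \<in> V" and J: "0 \<le> J"
  shows "\<exists>p\<in>set ps. D q p \<le> gp D q (hd ps) (last ps) + J"
proof (rule ccontr)
  assume "\<not> ?thesis"
  then have far: "\<And>p. p \<in> set ps \<Longrightarrow> D q p > gp D q (hd ps) (last ps) + J" by force
  let ?a = "hd ps" and ?b = "last ps"
  let ?h = "gp D q ?a ?b"
  have ne: "ps \<noteq> []" using w by auto
  have aV: "?a \<in> V" and bV: "?b \<in> V" using sV ne by auto
  have "\<not> gp D q ?a ?a \<le> ?h" using gp_self[OF qV aV] far[of ?a] ne J by simp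
  moreover have "gp D q ?a ?b \<le> ?h" by simp
  ultimately obtain i where i: "Suc i < length ps" "\<not> gp D q ?a (ps ! i) \<le> ?h" "gp D q ?a (ps ! Suc i) \<le> ?h"
    using list_switch[OF ne, of "\<lambda>p. gp D q ?a p \<le> ?h"] by auto
  have piV: "ps ! i \<in> V" "ps ! Suc i \<in> V" using sV i(1) by auto
  have "min (gp D q ?a (ps ! i)) (gp D q (ps ! i) (ps ! Suc i)) \<le> gp D q ?a (ps ! Suc i)"
    using hyp[OF qV aV piV] .
  then have g1: "gp D q (ps ! i) (ps ! Suc i) \<le> ?h" using i by linarith
  have e: "D (ps ! i) (ps ! Suc i) \<le> J" using walk_nth[OF w i(1)] by simp
  have f1: "D q (ps ! i) > ?h + J" and f2: "D q (ps ! Suc i) > ?h + J" using far i(1) by auto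
  have "D q (ps ! i) + D q (ps ! Suc i) - D (ps ! i) (ps ! Suc i) \<le> 2 * ?h"
    using g1 unfolding gp_def by simp
  then show False using e f1 f2 J by linarith
qed

lemma TR:
  assumes w: "walk (\<lambda>u v. D u v \<le> J) ps" and sV: "set ps \<subseteq> V" and lq: "last ps = q"
    and t: "0 \<le> t" "t < D q (hd ps)" and J: "0 \<le> J"
  shows "\<exists>p\<in>set ps. gp D q p (hd ps) > t \<and> D q p \<le> t + J"
proof -
  let ?a = "hd ps"
  have ne: "ps \<noteq> []" using w by auto
  have aV: "?a \<in> V" and qV: "q \<in> V" using sV ne lq by auto
  have "\<not> gp D q ?a ?a \<le> t" using gp_self[OF qV aV] t by simp
  moreover have "gp D q (last ps) ?a \<le> t" using gp_base[OF qV aV] lq t by simp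
  ultimately obtain i where i: "Suc i < length ps" "\<not> gp D q (ps ! i) ?a \<le> t" "gp D q (ps ! Suc i) ?a \<le> t"
    using list_switch[OF ne, of "\<lambda>p. gp D q p ?a \<le> t"] by auto
  have piV: "ps ! i \<in> V" "ps ! Suc i \<in> V" using sV i(1) by auto
  have "min (gp D q (ps ! Suc i) (ps ! i)) (gp D q (ps ! i) ?a) \<le> gp D q (ps ! Suc i) ?a"
    using hyp[OF qV piV(2) piV(1) aV] .
  then have g1: "gp D q (ps ! Suc i) (ps ! i) \<le> t" using i by linarith
  have e: "D (ps ! i) (ps ! Suc i) \<le> J" using walk_nth[OF w i(1)] by simp
  have e': "D (ps ! Suc i) (ps ! i) \<le> J" using e Dsym piV by simp
  have tri: "D q (ps ! i) \<le> D q (ps ! Suc i) + D (ps ! Suc i) (ps ! i)" using Dtri qV piV by blast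
  have "D q (ps ! Suc i) + D q (ps ! i) - D (ps ! Suc i) (ps ! i) \<le> 2 * t"
    using g1 unfolding gp_def by simp
  then have "D q (ps ! i) \<le> t + J" using e' tri by linarith
  moreover have "ps ! i \<in> set ps" using i(1) by simp
  ultimately show ?thesis using i(2) by force
qed

definition J where "J = K + C1"
definition M where "M = K * (K * (2 * J + C1)) + C1"
definition \<Delta> where "\<Delta> = K * (M + J + C1)"

lemma J_nonneg: "0 \<le> J" unfolding J_def using K1 C1 by simp

lemma map_walk:
  assumes "walk (\<lambda>u v. dist u v \<le> 1) zs"
  shows "walk (\<lambda>u v. D u v \<le> J) (map g zs)"
proof (rule walk_map[OF assms])
  fix u v :: 'a assume "dist u v \<le> 1"
  then have "K * dist u v \<le> K" using K1 by (simp add: mult_left_le)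
  then show "D (g u) (g v) \<le> J" using up[of u v] unfolding J_def by linarith
qed

lemma geo_dist:
  assumes "isgeo \<gamma> x y" "0 \<le> a" "a \<le> dist x y" "0 \<le> b" "b \<le> dist x y"
  shows "dist (\<gamma> a) (\<gamma> b) = \<bar>a - b\<bar>"
  using assms unfolding isgeo_def by auto

lemma BN:
  fixes \<gamma> :: "real \<Rightarrow> 'a"
  assumes geo: "isgeo \<gamma> x y" and s: "0 \<le> s" "s \<le> dist x y"
    and zs: "walk (\<lambda>u v. dist u v \<le> 1) zs" "hd zs = x" "last zs = y"
  shows "\<exists>z\<in>set zs. dist z (\<gamma> s) \<le> \<Delta>"
proof -
  let ?L = "dist x y"
  let ?w = "\<gamma> s" let ?q = "g ?w"
  let ?h = "gp D ?q (g x) (g y)"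
  have g0: "\<gamma> 0 = x" "\<gamma> ?L = y" using geo unfolding isgeo_def by auto
  have qV: "?q \<in> V" and xV: "g x \<in> V" and yV: "g y \<in> V" using gV by auto
  have hM: "?h \<le> M"
  proof (rule ccontr)
    assume "\<not> ?h \<le> M"
    then have hM: "M < ?h" by simp
    define t where "t = M"
    have t0: "0 \<le> t" unfolding t_def M_def using K1 C1 J_nonneg by simp
    let ?A = "map g (gch \<gamma> 0 s)"
    have wA: "walk (\<lambda>u v. D u v \<le> J) ?A" using map_walk gch_walk[OF geo order.refl s(1) s(2)] by blast
    have hA: "hd ?A = g x" using gch_basic[of \<gamma> 0 s] g0 by (simp add: hd_map)
    have lA: "last ?A = ?q" using gch_basic[of \<gamma> 0 s] by (simp add: last_map)
    have sA: "set ?A \<subseteq> V" using gV by auto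
    have tA: "t < D ?q (hd ?A)" using hA hM gp_le[OF qV xV yV] t_def by simp
    obtain p1 where p1: "p1 \<in> set ?A" "gp D ?q p1 (g x) > t" "D ?q p1 \<le> t + J"
      using TR[OF wA sA lA t0 tA J_nonneg] hA by auto
    obtain z1 where z1: "z1 \<in> set (gch \<gamma> 0 s)" "p1 = g z1" using p1(1) by auto
    obtain s1 where s1: "0 \<le> s1" "s1 \<le> s" "z1 = \<gamma> s1" using gch_set[OF s(1) z1(1)] by blast
    let ?B = "map g (rev (gch \<gamma> s ?L))"
    have wB0: "walk (\<lambda>u v. dist u v \<le> 1) (rev (gch \<gamma> s ?L))"
      by (rule walk_rev) (auto simp: dist_commute intro: gch_walk[OF geo s(1) s(2) order.refl])
    have wB: "walk (\<lambda>u v. D u v \<le> J) ?B" using map_walk[OF wB0] .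
    have hB: "hd ?B = g y" using gch_basic[of \<gamma> s ?L] g0 by (simp add: hd_map hd_rev)
    have lB: "last ?B = ?q" using gch_basic[of \<gamma> s ?L] by (simp add: last_map last_rev)
    have sB: "set ?B \<subseteq> V" using gV by auto
    have "?h \<le> D ?q (g y)" using gp_sym[OF xV yV, of ?q] gp_le[OF qV yV xV] by simp
    then have tB: "t < D ?q (hd ?B)" using hB hM t_def by simp
    obtain p2 where p2: "p2 \<in> set ?B" "gp D ?q p2 (g y) > t" "D ?q p2 \<le> t + J"
      using TR[OF wB sB lB t0 tB J_nonneg] hB by auto
    obtain z2 where z2: "z2 \<in> set (gch \<gamma> s ?L)" "p2 = g z2" using p2(1) by auto
    obtain s2 where s2: "s \<le> s2" "s2 \<le> ?L" "z2 = \<gamma> s2" using gch_set[OF s(2) z2(1)] by blast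
    have p1V: "p1 \<in> V" and p2V: "p2 \<in> V" using z1 z2 gV by auto
    have "min (gp D ?q p1 (g x)) (gp D ?q (g x) p2) \<le> gp D ?q p1 p2"
      using hyp[OF qV p1V xV p2V] .
    moreover have "min (gp D ?q (g x) (g y)) (gp D ?q (g y) p2) \<le> gp D ?q (g x) p2"
      using hyp[OF qV xV yV p2V] .
    moreover have "gp D ?q (g y) p2 = gp D ?q p2 (g y)" using gp_sym yV p2V by blast
    ultimately have gp12: "gp D ?q p1 p2 > t" using p1(2) p2(2) hM t_def by linarith
    have "D p1 p2 = D ?q p1 + D ?q p2 - 2 * gp D ?q p1 p2" unfolding gp_def by (simp add: field_simps)
    then have D12: "D p1 p2 < 2 * J" using gp12 p1(3) p2(3) by linarith
    have "dist z1 z2 \<le> K * (D p1 p2 + C1)" using lo' z1 z2 by simp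
    also have "\<dots> \<le> K * (2 * J + C1)" using D12 K1 by (intro mult_left_mono) auto
    finally have d12: "dist z1 z2 \<le> K * (2 * J + C1)" .
    have "dist z1 z2 = s2 - s1" using geo_dist[OF geo, of s1 s2] s1 s2 s by simp
    moreover have "dist ?w z1 = s - s1" using geo_dist[OF geo, of s s1] s1 s by simp
    ultimately have "dist ?w z1 \<le> K * (2 * J + C1)" using d12 s2 by simp
    then have "K * dist ?w z1 \<le> K * (K * (2 * J + C1))" using K1 by (intro mult_left_mono) auto
    then have "D ?q p1 \<le> M" using up[of ?w z1] z1 unfolding M_def by simp
    moreover have "gp D ?q p1 (g x) \<le> D ?q p1" using gp_le qV p1V xV by blast
    ultimately show False using p1(2) t_def by simp
  qed
  have wZ: "walk (\<lambda>u v. D u v \<le> J) (map g zs)" using map_walk[OF zs(1)] .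
  have ne: "zs \<noteq> []" using zs(1) by auto
  obtain p where p: "p \<in> set (map g zs)" "D ?q p \<le> gp D ?q (hd (map g zs)) (last (map g zs)) + J"
    using CH[OF wZ _ qV J_nonneg] gV by auto
  obtain z where z: "z \<in> set zs" "p = g z" using p(1) by auto
  have "D ?q p \<le> M + J" using p(2) hM zs ne by (simp add: hd_map last_map)
  then have "D (g z) (g ?w) + C1 \<le> M + J + C1" using Dsym qV gV z by simp
  then have "K * (D (g z) (g ?w) + C1) \<le> K * (M + J + C1)" using K1 by (intro mult_left_mono) auto
  then have "dist z ?w \<le> \<Delta>" using lo'[of z ?w] unfolding \<Delta>_def by linarith
  then show ?thesis using z by blast
qed

end


lemma geo_dist':
  assumes "isgeo \<gamma> x y" "0 \<le> a" "a \<le> dist x y" "0 \<le> b" "b \<le> dist x y"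
  shows "dist (\<gamma> a) (\<gamma> b) = \<bar>a - b\<bar>"
  using assms unfolding isgeo_def by auto

lemma closed_sphere': "closed (sphere (a::'a::metric_space) r)"
proof -
  have "sphere a r = cball a r - ball a r" by auto
  then show ?thesis by auto
qed

locale constr =
  fixes bp :: "'a::metric_space"
  assumes geod: "geodesic_space TYPE('a)" and propr: "proper_space TYPE('a)"
begin

definition nrm :: "'a \<Rightarrow> real" where "nrm x = dist bp x"

definition ch :: "nat \<Rightarrow> 'a \<Rightarrow> 'a \<Rightarrow> bool" where
  "ch k x y \<longleftrightarrow> (\<exists>zs. walk (\<lambda>u v. dist u v \<le> 1) zs \<and> hd zs = x \<and> last zs = y \<and> (\<forall>z\<in>set zs. real k \<le> nrm z))"

definition cls :: "nat \<Rightarrow> 'a \<Rightarrow> 'a set" where "cls k x = {y. ch k x y}"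

definition Vt :: "(nat \<times> 'a set) set" where "Vt = {(k, cls k x) | k x. real k \<le> nrm x}"

definition rt :: "nat \<times> 'a set" where "rt = (0, UNIV)"

definition pr :: "nat \<times> 'a set \<Rightarrow> nat \<times> 'a set" where
  "pr v = (fst v - 1, cls (fst v - 1) (SOME x. x \<in> snd v))"

definition Et :: "nat \<times> 'a set \<Rightarrow> nat \<times> 'a set \<Rightarrow> bool" where
  "Et u v \<longleftrightarrow> u \<in> Vt \<and> v \<in> Vt \<and> ((v \<noteq> rt \<and> u = pr v) \<or> (u \<noteq> rt \<and> v = pr u))"

lemma ch_refl: "real k \<le> nrm x \<Longrightarrow> ch k x x"
  unfolding ch_def by (intro exI[of _ "[x]"]) simp

lemma ch_nrm: "ch k x y \<Longrightarrow> real k \<le> nrm x \<and> real k \<le> nrm y"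
  unfolding ch_def
proof (elim exE conjE)
  fix zs assume a: "walk (\<lambda>u v. dist u v \<le> 1) zs" "hd zs = x" "last zs = y" "\<forall>z\<in>set zs. real k \<le> nrm z"
  then have "zs \<noteq> []" by auto
  then have "x \<in> set zs" "y \<in> set zs" using a(2,3) by auto
  then show ?thesis using a(4) by blast
qed

lemma ch_sym: "ch k x y \<Longrightarrow> ch k y x"
  unfolding ch_def
proof (elim exE conjE)
  fix zs assume a: "walk (\<lambda>u v. dist u v \<le> 1) zs" "hd zs = x" "last zs = y" "\<forall>z\<in>set zs. real k \<le> nrm z"
  have ne: "zs \<noteq> []" using a by auto
  have "walk (\<lambda>u v. dist u v \<le> 1) (rev zs)" by (rule walk_rev) (auto simp: dist_commute a(1))
  then show "\<exists>zs. walk (\<lambda>u v. dist u v \<le> 1) zs \<and> hd zs = y \<and> last zs = x \<and> (\<forall>z\<in>set zs. real k \<le> nrm z)"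
    using a ne by (intro exI[of _ "rev zs"]) (auto simp: hd_rev last_rev)
qed

lemma ch_trans: "ch k x y \<Longrightarrow> ch k y z \<Longrightarrow> ch k x z"
  unfolding ch_def
proof (elim exE conjE)
  fix xs ys assume a: "walk (\<lambda>u v. dist u v \<le> 1) xs" "hd xs = x" "last xs = y" "\<forall>z\<in>set xs. real k \<le> nrm z"
    and b: "walk (\<lambda>u v. dist u v \<le> 1) ys" "hd ys = y" "last ys = z" "\<forall>z\<in>set ys. real k \<le> nrm z"
  have ne: "xs \<noteq> []" "ys \<noteq> []" using a b by auto
  have "walk (\<lambda>u v. dist u v \<le> 1) (xs @ tl ys)" using walk_append_shared a b by metis
  moreover have "hd (xs @ tl ys) = x" using a ne by simp
  moreover have "last (xs @ tl ys) = z" using last_shared[OF ne] a b by simp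
  moreover have "\<forall>w\<in>set (xs @ tl ys). real k \<le> nrm w" using a b ne by (auto dest: list.set_sel(2))
  ultimately show "\<exists>zs. walk (\<lambda>u v. dist u v \<le> 1) zs \<and> hd zs = x \<and> last zs = z \<and> (\<forall>z\<in>set zs. real k \<le> nrm z)"
    by blast
qed

lemma ch_mono: "j \<le> k \<Longrightarrow> ch k x y \<Longrightarrow> ch j x y"
  unfolding ch_def
proof (elim exE conjE)
  fix zs assume jk: "j \<le> k" and a: "walk (\<lambda>u v. dist u v \<le> 1) zs" "hd zs = x" "last zs = y" "\<forall>z\<in>set zs. real k \<le> nrm z"
  have "real j \<le> real k" using jk by simp
  then have "\<forall>z\<in>set zs. real j \<le> nrm z" using a(4) by force
  then show "\<exists>zs. walk (\<lambda>u v. dist u v \<le> 1) zs \<and> hd zs = x \<and> last zs = y \<and> (\<forall>z\<in>set zs. real j \<le> nrm z)"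
    using a by blast
qed

lemma cls_eq: assumes c: "ch k x y" shows "cls k x = cls k y"
proof -
  have "ch k x z \<longleftrightarrow> ch k y z" for z
    using ch_trans[OF ch_sym[OF c], of z] ch_trans[OF c, of z] by blast
  then show ?thesis unfolding cls_def by blast
qed

lemma cls_eq_iff: "real k \<le> nrm x \<Longrightarrow> cls k x = cls k y \<longleftrightarrow> ch k x y"
proof
  assume n: "real k \<le> nrm x" and e: "cls k x = cls k y"
  have "x \<in> cls k x" using ch_refl[OF n] unfolding cls_def by simp
  then have "ch k y x" using e unfolding cls_def by simp
  then show "ch k x y" by (rule ch_sym)
qed (rule cls_eq)

lemma nrm_geo:
  assumes g: "isgeo \<gamma> x bp" "0 \<le> \<tau>" "\<tau> \<le> dist x bp"
  shows "nrm (\<gamma> \<tau>) = dist x bp - \<tau>"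
proof -
  have "\<gamma> (dist x bp) = bp" using g unfolding isgeo_def by simp
  then have "nrm (\<gamma> \<tau>) = dist (\<gamma> (dist x bp)) (\<gamma> \<tau>)" unfolding nrm_def by simp
  also have "\<dots> = \<bar>dist x bp - \<tau>\<bar>" using geo_dist'[OF g(1), of "dist x bp" \<tau>] g by simp
  finally show ?thesis using g by simp
qed

lemma geo_chain:
  assumes g: "isgeo \<gamma> x y" and k: "2 * real k \<le> nrm x + nrm y - dist x y"
  shows "ch k x y"
proof -
  let ?L = "dist x y"
  have g0: "\<gamma> 0 = x" "\<gamma> ?L = y" using g unfolding isgeo_def by auto
  have w: "walk (\<lambda>u v. dist u v \<le> 1) (gch \<gamma> 0 ?L)" using gch_walk[OF g] by simp
  have "\<forall>z\<in>set (gch \<gamma> 0 ?L). real k \<le> nrm z"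
  proof
    fix z assume z: "z \<in> set (gch \<gamma> 0 ?L)"
    have L0: "0 \<le> ?L" by simp
    obtain \<sigma> where s: "0 \<le> \<sigma>" "\<sigma> \<le> ?L" "z = \<gamma> \<sigma>" using gch_set[OF L0 z] by blast
    have d1: "dist x z = \<sigma>" using geo_dist'[OF g, of 0 \<sigma>] s g0 by simp
    have d2: "dist z y = ?L - \<sigma>" using geo_dist'[OF g, of \<sigma> ?L] s g0 by simp
    have "nrm x \<le> nrm z + dist z x" unfolding nrm_def by (rule dist_triangle)
    moreover have "nrm y \<le> nrm z + dist z y" unfolding nrm_def by (rule dist_triangle)
    moreover have "dist z x = \<sigma>" using d1 by (simp add: dist_commute)
    ultimately have "nrm x + nrm y - dist x y \<le> 2 * nrm z" using d2 by linarith
    then show "real k \<le> nrm z" using k by linarith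
  qed
  moreover have "hd (gch \<gamma> 0 ?L) = x" "last (gch \<gamma> 0 ?L) = y" using gch_basic[of \<gamma> 0 ?L] g0 by auto
  ultimately show ?thesis unfolding ch_def using w by blast
qed

lemma gprod_nonneg: "0 \<le> nrm x + nrm y - dist x y"
  unfolding nrm_def using dist_triangle[of x y bp] dist_commute[of x bp] by linarith

lemma gprod_le: "nrm x + nrm y - dist x y \<le> 2 * nrm x"
  unfolding nrm_def using dist_triangle[of bp y x] by linarith

lemma ch0: "ch 0 x y"
proof -
  obtain \<gamma> where "isgeo \<gamma> x y" using geo_ex[OF geod] by blast
  then show ?thesis using geo_chain gprod_nonneg by simp
qed

lemma cls0: "cls 0 x = UNIV" unfolding cls_def using ch0 by blast

lemma sphere_pt:
  assumes "real k \<le> nrm x"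
  shows "\<exists>x'. nrm x' = real k \<and> ch k x x'"
proof -
  obtain \<gamma> where g: "isgeo \<gamma> x bp" using geo_ex[OF geod] by blast
  let ?L = "dist x bp"
  have L: "?L = nrm x" unfolding nrm_def by (simp add: dist_commute)
  define \<sigma> where "\<sigma> = ?L - real k"
  have s: "0 \<le> \<sigma>" "\<sigma> \<le> ?L" using assms L unfolding \<sigma>_def by auto
  have g0: "\<gamma> 0 = x" using g unfolding isgeo_def by auto
  have w: "walk (\<lambda>u v. dist u v \<le> 1) (gch \<gamma> 0 \<sigma>)" using gch_walk[OF g order.refl s(1) s(2)] .
  have "\<forall>z\<in>set (gch \<gamma> 0 \<sigma>). real k \<le> nrm z"
  proof
    fix z assume z: "z \<in> set (gch \<gamma> 0 \<sigma>)"
    obtain \<tau> where t: "0 \<le> \<tau>" "\<tau> \<le> \<sigma>" "z = \<gamma> \<tau>" using gch_set[OF s(1) z] by blast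
    have "\<tau> \<le> dist x bp" using t s by linarith
    then have "nrm z = dist x bp - \<tau>" using nrm_geo[OF g t(1)] t(3) by simp
    then show "real k \<le> nrm z" using t(2) unfolding \<sigma>_def by linarith
  qed
  moreover have "hd (gch \<gamma> 0 \<sigma>) = x" "last (gch \<gamma> 0 \<sigma>) = \<gamma> \<sigma>" using gch_basic[of \<gamma> 0 \<sigma>] g0 by auto
  ultimately have "ch k x (\<gamma> \<sigma>)" unfolding ch_def using w by blast
  moreover have "nrm (\<gamma> \<sigma>) = real k" using nrm_geo[OF g s] unfolding \<sigma>_def by simp
  ultimately show ?thesis by blast
qed

lemma pr_cls:
  assumes "real k \<le> nrm x"
  shows "pr (k, cls k x) = (k - 1, cls (k - 1) x)"
proof -
  have "x \<in> cls k x" using ch_refl[OF assms] unfolding cls_def by simp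
  then have "(SOME y. y \<in> cls k x) \<in> cls k x" by (rule someI)
  then have "ch k x (SOME y. y \<in> cls k x)" unfolding cls_def by simp
  then have "ch (k - 1) x (SOME y. y \<in> cls k x)" using ch_mono[of "k - 1" k] by simp
  then show ?thesis unfolding pr_def using cls_eq by simp
qed

lemma Vt_cases: "v \<in> Vt \<Longrightarrow> \<exists>k x. v = (k, cls k x) \<and> real k \<le> nrm x"
  unfolding Vt_def by blast

lemma Vt_I: "real k \<le> nrm x \<Longrightarrow> (k, cls k x) \<in> Vt"
  unfolding Vt_def by blast

lemma rt_in: "rt \<in> Vt"
  using Vt_I[of 0 bp] cls0 unfolding rt_def nrm_def by simp

lemma rooted_Vt: "rooted Vt Et fst pr rt"
proof
  show "rt \<in> Vt" by (rule rt_in)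
  show "fst rt = 0" unfolding rt_def by simp
  fix v assume v: "v \<in> Vt"
  then obtain k x where kx: "v = (k, cls k x)" "real k \<le> nrm x" using Vt_cases by blast
  show "fst v = 0 \<Longrightarrow> v = rt" using kx cls0 unfolding rt_def by simp
  assume "v \<noteq> rt"
  then have "k \<noteq> 0" using kx cls0 unfolding rt_def by auto
  then show "pr v \<in> Vt" "Suc (fst (pr v)) = fst v" using pr_cls[OF kx(2)] kx Vt_I[of "k - 1" x] by auto
next
  fix u v show "Et u v \<longleftrightarrow> (u \<in> Vt \<and> v \<in> Vt \<and> ((v \<noteq> rt \<and> u = pr v) \<or> (u \<noteq> rt \<and> v = pr u)))"
    unfolding Et_def by simp
qed

sublocale R: rooted Vt Et fst pr rt by (rule rooted_Vt)

lemma iter_pr: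
  assumes "real k \<le> nrm x" "i \<le> k"
  shows "(pr ^^ i) (k, cls k x) = (k - i, cls (k - i) x)"
  using assms(2)
proof (induction i)
  case 0 then show ?case by simp
next
  case (Suc i)
  have "real (k - i) \<le> nrm x" using assms(1) by linarith
  then show ?case using Suc pr_cls[of "k - i" x] by (simp add: diff_Suc)
qed

lemma anc_cls:
  assumes "real k \<le> nrm x" "j \<le> k"
  shows "R.anc j (k, cls k x) = (j, cls j x)"
  unfolding R.anc_def using iter_pr[OF assms(1), of "k - j"] assms(2) by simp

lemma meet_cls:
  assumes x: "real k \<le> nrm x" and y: "real l \<le> nrm y"
  shows "ch (R.meet (k, cls k x) (l, cls l y)) x y"
    and "\<And>j. j \<le> min k l \<Longrightarrow> ch j x y \<Longrightarrow> j \<le> R.meet (k, cls k x) (l, cls l y)"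
proof -
  let ?m = "R.meet (k, cls k x) (l, cls l y)"
  have m: "?m \<le> min k l" "R.anc ?m (k, cls k x) = R.anc ?m (l, cls l y)"
    using R.meet_prop[OF Vt_I[OF x] Vt_I[OF y]] by auto
  then have "cls ?m x = cls ?m y" using anc_cls[OF x] anc_cls[OF y] by simp
  moreover have "real ?m \<le> nrm x" using m x by linarith
  ultimately show "ch ?m x y" using cls_eq_iff by blast
  fix j assume j: "j \<le> min k l" "ch j x y"
  have "cls j x = cls j y" using cls_eq[OF j(2)] .
  then have "R.anc j (k, cls k x) = R.anc j (l, cls l y)" using anc_cls[OF x] anc_cls[OF y] j(1) by simp
  then show "j \<le> ?m" using R.meet_ge j(1) by simp
qed

definition nf :: "'a \<Rightarrow> nat" where "nf x = nat \<lfloor>nrm x\<rfloor>"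
definition f0 :: "'a \<Rightarrow> nat \<times> 'a set" where "f0 x = (nf x, cls (nf x) x)"

lemma nf_le: "real (nf x) \<le> nrm x" and nf_gt: "nrm x < real (nf x) + 1"
proof -
  have "0 \<le> nrm x" unfolding nrm_def by simp
  then show "real (nf x) \<le> nrm x" "nrm x < real (nf x) + 1" unfolding nf_def by linarith+
qed

lemma f0_in: "f0 x \<in> Vt" unfolding f0_def using Vt_I nf_le by blast

lemma gd_f0_upper: "real (gd Et (f0 x) (f0 y)) \<le> dist x y + 2"
proof -
  let ?m = "R.meet (f0 x) (f0 y)"
  have gdf: "gd Et (f0 x) (f0 y) = nf x + nf y - 2 * ?m" using R.gd_formula[OF f0_in f0_in] by (simp add: f0_def)
  have ml: "2 * ?m \<le> nf x + nf y" using R.meet_le[OF f0_in f0_in] by (simp add: f0_def)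
  let ?P = "nrm x + nrm y - dist x y"
  define k0 where "k0 = nat \<lfloor>?P / 2\<rfloor>"
  have P0: "0 \<le> ?P / 2" using gprod_nonneg[of x y] by simp
  have k0': "real k0 \<le> ?P / 2" "?P / 2 < real k0 + 1" unfolding k0_def using P0 by linarith+
  have k0: "2 * real k0 \<le> ?P" "?P < 2 * real k0 + 2" using k0' by simp_all
  obtain \<gamma> where "isgeo \<gamma> x y" using geo_ex[OF geod] by blast
  then have c: "ch k0 x y" using geo_chain k0 by blast
  have "?P / 2 \<le> nrm x" using gprod_le[of x y] by simp
  then have "k0 \<le> nf x" unfolding k0_def nf_def by (intro nat_mono floor_mono)
  moreover have "?P / 2 \<le> nrm y" using gprod_le[of y x] by (simp add: dist_commute add.commute)
  then have "k0 \<le> nf y" unfolding k0_def nf_def by (intro nat_mono floor_mono)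
  ultimately have "k0 \<le> ?m" using meet_cls(2)[OF nf_le[of x] nf_le[of y], of k0] c unfolding f0_def by simp
  then have "real (gd Et (f0 x) (f0 y)) \<le> real (nf x) + real (nf y) - 2 * real k0"
    using gdf ml by (simp add: of_nat_diff)
  then show ?thesis using k0 nf_le[of x] nf_le[of y] by linarith
qed

lemma LB:
  assumes BNp: "\<And>(\<gamma>::real \<Rightarrow> 'a) x y s zs. isgeo \<gamma> x y \<Longrightarrow> 0 \<le> s \<Longrightarrow> s \<le> dist x y \<Longrightarrow>
      walk (\<lambda>u v. dist u v \<le> 1) zs \<Longrightarrow> hd zs = x \<Longrightarrow> last zs = y \<Longrightarrow> \<exists>z\<in>set zs. dist z (\<gamma> s) \<le> \<Delta>"
    and D0: "0 \<le> \<Delta>" and c: "ch m x y"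
  shows "2 * real m \<le> nrm x + nrm y - dist x y + 4 * \<Delta> + 2"
proof (cases "real m - \<Delta> - 1 \<le> 0")
  case True then show ?thesis using gprod_nonneg[of x y] D0 by linarith
next
  case False
  define r0 where "r0 = real m - \<Delta> - 1"
  have r0: "0 < r0" using False r0_def by simp
  obtain zs where zs: "walk (\<lambda>u v. dist u v \<le> 1) zs" "hd zs = x" "last zs = y" "\<forall>z\<in>set zs. real m \<le> nrm z"
    using c unfolding ch_def by blast
  have nx: "real m \<le> nrm x" using ch_nrm[OF c] by simp
  obtain \<gamma> where g: "isgeo \<gamma> x bp" using geo_ex[OF geod] by blast
  obtain \<delta> where d: "isgeo \<delta> y bp" using geo_ex[OF geod] by blast
  have Lx: "dist x bp = nrm x" and Ly: "dist y bp = nrm y" unfolding nrm_def by (simp_all add: dist_commute)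
  define \<sigma> where "\<sigma> = nrm x - r0"
  have s: "0 \<le> \<sigma>" "\<sigma> \<le> dist x bp" using nx r0 D0 Lx unfolding \<sigma>_def r0_def by auto
  have nw: "nrm (\<gamma> \<sigma>) = r0" using nrm_geo[OF g s] Lx unfolding \<sigma>_def by simp
  have dxw: "dist x (\<gamma> \<sigma>) = \<sigma>" using geo_dist'[OF g, of 0 \<sigma>] s g unfolding isgeo_def by auto
  let ?ys = "gch \<delta> 0 (dist y bp)"
  have wy: "walk (\<lambda>u v. dist u v \<le> 1) ?ys" using gch_walk[OF d] by simp
  have hy: "hd ?ys = y" and ly: "last ?ys = bp" and ney: "?ys \<noteq> []"
    using gch_basic[of \<delta> 0 "dist y bp"] d unfolding isgeo_def by auto
  have nez: "zs \<noteq> []" using zs by auto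
  let ?ws = "zs @ tl ?ys"
  have ww: "walk (\<lambda>u v. dist u v \<le> 1) ?ws" using walk_append_shared[OF zs(1) wy] zs(3) hy by simp
  have hw: "hd ?ws = x" using zs nez by simp
  have lw: "last ?ws = bp" using last_shared[OF nez ney] zs(3) hy ly by simp
  obtain z where z: "z \<in> set ?ws" "dist z (\<gamma> \<sigma>) \<le> \<Delta>" using BNp[OF g s ww hw lw] by blast
  have tri1: "nrm z \<le> nrm (\<gamma> \<sigma>) + dist (\<gamma> \<sigma>) z" unfolding nrm_def by (rule dist_triangle)
  have tri2: "nrm (\<gamma> \<sigma>) \<le> nrm z + dist z (\<gamma> \<sigma>)" unfolding nrm_def by (rule dist_triangle)
  show ?thesis
  proof (cases "z \<in> set zs")
    case True
    then have "real m \<le> nrm z" using zs by blast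
    then show ?thesis using tri1 z(2) nw r0_def by (simp add: dist_commute)
  next
    case False
    then have zy: "z \<in> set ?ys" using z(1) list.set_sel(2)[OF ney] by auto
    have L0: "0 \<le> dist y bp" by simp
    obtain \<tau> where t: "0 \<le> \<tau>" "\<tau> \<le> dist y bp" "z = \<delta> \<tau>" using gch_set[OF L0 zy] by blast
    have nz: "nrm z = nrm y - \<tau>" using nrm_geo[OF d t(1,2)] t(3) Ly by simp
    have dyz: "dist y z = \<tau>" using geo_dist'[OF d, of 0 \<tau>] t d unfolding isgeo_def by auto
    have "dist x y \<le> dist x (\<gamma> \<sigma>) + dist (\<gamma> \<sigma>) y" by (rule dist_triangle)
    also have "\<dots> \<le> dist x (\<gamma> \<sigma>) + (dist (\<gamma> \<sigma>) z + dist z y)" using dist_triangle by simp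
    finally have "dist x y \<le> \<sigma> + \<Delta> + \<tau>" using dxw z(2) dyz by (simp add: dist_commute)
    then show ?thesis using nz tri2 z(2) nw unfolding \<sigma>_def r0_def by linarith
  qed
qed

end


context rooted begin

lemma transport:
  assumes inj: "inj_on h V"
  shows "rooted (h ` V) (\<lambda>a b. \<exists>u v. E u v \<and> a = h u \<and> b = h v)
           (\<lambda>a. lev (inv_into V h a)) (\<lambda>a. h (par (inv_into V h a))) (h r)"
proof
  have ih: "\<And>v. v \<in> V \<Longrightarrow> inv_into V h (h v) = v" using inj by (simp add: inv_into_f_f)
  show "h r \<in> h ` V" using r_in by simp
  show "lev (inv_into V h (h r)) = 0" using ih r_in lev_r by simp
  fix a assume a: "a \<in> h ` V"
  then obtain v where v: "v \<in> V" "a = h v" by blast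
  show "lev (inv_into V h a) = 0 \<Longrightarrow> a = h r" using v ih lev0 by simp
  assume "a \<noteq> h r"
  then have vr: "v \<noteq> r" using v by auto
  show "h (par (inv_into V h a)) \<in> h ` V" using v ih par_in vr by simp
  show "Suc (lev (inv_into V h (h (par (inv_into V h a))))) = lev (inv_into V h a)"
    using v ih par_in vr lev_par by simp
next
  have ih: "\<And>v. v \<in> V \<Longrightarrow> inv_into V h (h v) = v" using inj by (simp add: inv_into_f_f)
  fix a b
  show "(\<exists>u v. E u v \<and> a = h u \<and> b = h v) \<longleftrightarrow>
    (a \<in> h ` V \<and> b \<in> h ` V \<and> ((b \<noteq> h r \<and> a = h (par (inv_into V h b))) \<or> (a \<noteq> h r \<and> b = h (par (inv_into V h a)))))"
  proof
    assume "\<exists>u v. E u v \<and> a = h u \<and> b = h v"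
    then obtain u v where e: "E u v" "a = h u" "b = h v" by blast
    have uv: "u \<in> V" "v \<in> V" using E_cases[OF e(1)] by auto
    have rV: "r \<in> V" by (rule r_in)
    have hne: "\<And>x. x \<in> V \<Longrightarrow> x \<noteq> r \<Longrightarrow> h x \<noteq> h r" using inj rV by (metis inj_on_eq_iff)
    show "a \<in> h ` V \<and> b \<in> h ` V \<and> ((b \<noteq> h r \<and> a = h (par (inv_into V h b))) \<or> (a \<noteq> h r \<and> b = h (par (inv_into V h a))))"
      using E_iff[of u v] e uv ih hne by auto
  next
    assume as: "a \<in> h ` V \<and> b \<in> h ` V \<and> ((b \<noteq> h r \<and> a = h (par (inv_into V h b))) \<or> (a \<noteq> h r \<and> b = h (par (inv_into V h a))))"
    then obtain u v where uv: "u \<in> V" "v \<in> V" "a = h u" "b = h v" by blast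
    have c: "(v \<noteq> r \<and> h u = h (par v)) \<or> (u \<noteq> r \<and> h v = h (par u))" using as uv ih by auto
    have "E u v"
    proof (cases "v \<noteq> r \<and> h u = h (par v)")
      case True
      then have "u = par v" using inj uv par_in by (metis inj_on_eq_iff)
      then show ?thesis using E_iff uv True by blast
    next
      case False
      then have "u \<noteq> r" "h v = h (par u)" using c by auto
      then have "v = par u" using inj uv par_in by (metis inj_on_eq_iff)
      then show ?thesis using E_iff uv \<open>u \<noteq> r\<close> by blast
    qed
    then show "\<exists>u v. E u v \<and> a = h u \<and> b = h v" using uv by blast
  qed
qed

lemma transport_gd:
  assumes inj: "inj_on h V" and a: "a \<in> V" and b: "b \<in> V"
  shows "gd (\<lambda>a b. \<exists>u v. E u v \<and> a = h u \<and> b = h v) (h a) (h b) = gd E a b"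
proof -
  interpret R': rooted "h ` V" "\<lambda>a b. \<exists>u v. E u v \<and> a = h u \<and> b = h v"
    "\<lambda>a. lev (inv_into V h a)" "\<lambda>a. h (par (inv_into V h a))" "h r"
    by (rule transport[OF inj])
  have ih: "\<And>v. v \<in> V \<Longrightarrow> inv_into V h (h v) = v" using inj by (simp add: inv_into_f_f)
  have it: "((\<lambda>a. h (par (inv_into V h a))) ^^ i) (h v) = h ((par ^^ i) v)" if "v \<in> V" "i \<le> lev v" for v i
    using that(2)
  proof (induction i)
    case 0 then show ?case by simp
  next
    case (Suc i)
    have "(par ^^ i) v \<in> V" using iter_par[OF that(1)] Suc.prems by simp
    then show ?case using Suc ih by simp
  qed
  have anc': "R'.anc k (h v) = h (anc k v)" if "v \<in> V" "k \<le> lev v" for v k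
    unfolding R'.anc_def anc_def using it[OF that(1), of "lev v - k"] ih[OF that(1)] by simp
  have P: "(k \<le> min (lev (inv_into V h (h a))) (lev (inv_into V h (h b))) \<and> R'.anc k (h a) = R'.anc k (h b))
       \<longleftrightarrow> (k \<le> min (lev a) (lev b) \<and> anc k a = anc k b)" for k
  proof (cases "k \<le> min (lev a) (lev b)")
    case True
    have ab: "anc k a \<in> V" "anc k b \<in> V" using anc_in a b True by auto
    have "h (anc k a) = h (anc k b) \<longleftrightarrow> anc k a = anc k b" using inj_on_eq_iff[OF inj ab] .
    then show ?thesis using True anc'[OF a] anc'[OF b] ih a b by simp
  next
    case False then show ?thesis using ih a b by auto
  qed
  have "R'.meet (h a) (h b) = meet a b" unfolding R'.meet_def meet_def using P by simp
  then show ?thesis using R'.gd_formula[of "h a" "h b"] gd_formula[OF a b] a b ih by simp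
qed

end

context constr begin

lemma gd_f0_lower:
  assumes BNp: "\<And>(\<gamma>::real \<Rightarrow> 'a) x y s zs. isgeo \<gamma> x y \<Longrightarrow> 0 \<le> s \<Longrightarrow> s \<le> dist x y \<Longrightarrow>
      walk (\<lambda>u v. dist u v \<le> 1) zs \<Longrightarrow> hd zs = x \<Longrightarrow> last zs = y \<Longrightarrow> \<exists>z\<in>set zs. dist z (\<gamma> s) \<le> \<Delta>"
    and D0: "0 \<le> \<Delta>"
  shows "dist x y - 4 - 4 * \<Delta> \<le> real (gd Et (f0 x) (f0 y))"
proof -
  let ?m = "R.meet (f0 x) (f0 y)"
  have gdf: "gd Et (f0 x) (f0 y) = nf x + nf y - 2 * ?m" using R.gd_formula[OF f0_in f0_in] by (simp add: f0_def)
  have ml: "2 * ?m \<le> nf x + nf y" using R.meet_le[OF f0_in f0_in] by (simp add: f0_def)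
  have c: "ch ?m x y" using meet_cls(1)[OF nf_le[of x] nf_le[of y]] unfolding f0_def by simp
  have "2 * real ?m \<le> nrm x + nrm y - dist x y + 4 * \<Delta> + 2"
    apply (rule LB[where \<Delta> = \<Delta>])
      apply (rule BNp; assumption)
     apply (rule D0)
    apply (rule c)
    done
  moreover have "real (gd Et (f0 x) (f0 y)) = real (nf x) + real (nf y) - 2 * real ?m"
    using gdf ml by (simp add: of_nat_diff)
  ultimately show ?thesis using nf_gt[of x] nf_gt[of y] by linarith
qed

lemma lvl_fin: "finite {v \<in> Vt. fst v = k}"
proof -
  let ?S = "sphere bp (real k)"
  have "compact (cball bp (real k))" using propr unfolding proper_space_def by blast
  then have "compact (cball bp (real k) \<inter> ?S)" using closed_sphere' by (rule compact_Int_closed)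
  moreover have "cball bp (real k) \<inter> ?S = ?S" using sphere_cball by blast
  ultimately have cS: "compact ?S" by simp
  have cov: "?S \<subseteq> (\<Union>p\<in>?S. ball p 1)" by force
  obtain F where F: "F \<subseteq> ?S" "finite F" "?S \<subseteq> (\<Union>p\<in>F. ball p 1)"
    using compactE_image[OF cS _ cov] by blast
  have "{v \<in> Vt. fst v = k} \<subseteq> (\<lambda>p. (k, cls k p)) ` F"
  proof
    fix v assume v: "v \<in> {v \<in> Vt. fst v = k}"
    then obtain x where x: "v = (k, cls k x)" "real k \<le> nrm x" using Vt_cases by fastforce
    obtain x' where x': "nrm x' = real k" "ch k x x'" using sphere_pt[OF x(2)] by blast
    have "x' \<in> ?S" using x'(1) unfolding nrm_def by simp
    then obtain p where p: "p \<in> F" "dist p x' < 1" using F(3) by force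
    have pn: "nrm p = real k" using p(1) F(1) unfolding nrm_def by auto
    have "walk (\<lambda>u v. dist u v \<le> 1) [x', p]" using p(2) by (simp add: dist_commute)
    then have "ch k x' p" unfolding ch_def using x'(1) pn by (intro exI[of _ "[x', p]"]) auto
    then have "cls k x = cls k p" using cls_eq x'(2) by (metis ch_trans)
    then show "v \<in> (\<lambda>p. (k, cls k p)) ` F" using x p by auto
  qed
  then show ?thesis using F(2) finite_subset by blast
qed

lemma Vt_countable: "countable Vt"
proof -
  have "Vt = (\<Union>k. {v \<in> Vt. fst v = k})" by auto
  moreover have "countable (\<Union>k. {v \<in> Vt. fst v = k})"
    using lvl_fin countable_finite by (intro countable_UN) auto
  ultimately show ?thesis by simp
qed

lemma nbr_fin: "finite {v. Et u v}"
proof -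
  have "{v. Et u v} \<subseteq> insert (pr u) {v \<in> Vt. fst v = Suc (fst u)}"
    using R.E_cases by fastforce
  then show ?thesis using lvl_fin finite_subset by blast
qed

lemma f0_onto:
  assumes "u \<in> Vt" shows "\<exists>x. f0 x = u"
proof -
  obtain k x where kx: "u = (k, cls k x)" "real k \<le> nrm x" using Vt_cases assms by blast
  obtain x' where x': "nrm x' = real k" "ch k x x'" using sphere_pt[OF kx(2)] by blast
  have "nf x' = k" unfolding nf_def using x'(1) by simp
  then have "f0 x' = u" unfolding f0_def using kx cls_eq[OF x'(2)] by simp
  then show ?thesis by blast
qed

end


lemma hq_nonneg:
  assumes "hq V D g K C1"
  shows "0 \<le> hq.\<Delta> K C1"
proof -
  interpret hq V D g K C1 by (rule assms)
  have "0 \<le> J" by (rule J_nonneg)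
  moreover have "0 \<le> M" unfolding M_def using K1 C1 \<open>0 \<le> J\<close> by simp
  ultimately show ?thesis unfolding \<Delta>_def using K1 C1 by simp
qed

theorem corollary4p26:
  fixes V :: "'v set" and E :: "'v \<Rightarrow> 'v \<Rightarrow> bool"
  assumes "geodesic_space TYPE('a::metric_space)"
    and "proper_space TYPE('a)"
    and "is_tree V E"
    and "quasi_isometric (UNIV :: 'a set) dist (tree_points V E) (tree_dist E)"
  shows "\<exists>C\<ge>0. \<exists>(W :: nat set) F f.
           is_tree W F \<and> locally_finite_graph W F \<and>
           qi_map 1 C (UNIV :: 'a set) dist (tree_points W F) (tree_dist F) f"
proof -
  obtain K C f1 where K: "1 \<le> K" "0 \<le> C" and qi: "qi_map K C (UNIV :: 'a set) dist (tree_points V E) (tree_dist E) f1"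
    using assms(4) unfolding quasi_isometric_def by blast
  have Vne: "V \<noteq> {}" using assms(3) unfolding is_tree_def by simp
  then obtain r where rV: "r \<in> V" by blast
  interpret T: tree_root V E r using assms(3) rV by unfold_locales
  have connV: "\<And>x y. x \<in> V \<Longrightarrow> y \<in> V \<Longrightarrow> conn E x y" by (rule T.conn_V)
  have EV: "\<And>x y. E x y \<Longrightarrow> x \<in> V \<and> y \<in> V" using T.E_V by blast
  define g where "g x = fst (f1 x)" for x
  have f1in: "f1 x \<in> tree_points V E" for x using qi unfolding qi_map_def by auto
  have gV: "g x \<in> V" for x
  proof -
    obtain u v s where "f1 x = (u, v, s)" by (cases "f1 x") auto
    then show ?thesis using f1in[of x] EV unfolding g_def tree_points_def by auto
  qed
  have appr: "tree_dist E (f1 x) (f1 y) \<le> gdist E (g x) (g y) + 2 \<and> gdist E (g x) (g y) \<le> tree_dist E (f1 x) (f1 y) + 2" for x y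
  proof -
    obtain u v s where u: "f1 x = (u, v, s)" by (cases "f1 x") auto
    obtain c d t where c: "f1 y = (c, d, t)" by (cases "f1 y") auto
    show ?thesis using tree_dist_approx[OF connV EV T.Esym, of u v s c d t] f1in[of x] f1in[of y] u c
      unfolding g_def by auto
  qed
  have qib: "dist x y / K - C \<le> tree_dist E (f1 x) (f1 y) \<and> tree_dist E (f1 x) (f1 y) \<le> K * dist x y + C" for x y
    using qi unfolding qi_map_def by auto
  interpret H: hq V "gdist E" g K "C + 2"
  proof
    show "\<And>x. g x \<in> V" by (rule gV)
    show "\<And>x y. x \<in> V \<Longrightarrow> y \<in> V \<Longrightarrow> gdist E x y = gdist E y x"
      unfolding gdist_gd using gd_sym[of E] T.Esym by metis
    show "\<And>x y z. x \<in> V \<Longrightarrow> y \<in> V \<Longrightarrow> z \<in> V \<Longrightarrow> gdist E x z \<le> gdist E x y + gdist E y z"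
      unfolding gdist_gd using gd_triangle connV by (metis of_nat_add of_nat_le_iff)
    show "\<And>x. x \<in> V \<Longrightarrow> gdist E x x = 0" unfolding gdist_gd by simp
    show "\<And>q a b c. q \<in> V \<Longrightarrow> a \<in> V \<Longrightarrow> b \<in> V \<Longrightarrow> c \<in> V \<Longrightarrow>
          min (gp (gdist E) q a b) (gp (gdist E) q b c) \<le> gp (gdist E) q a c"
      by (rule T.gp_hyp)
    show "1 \<le> K" by (rule K(1))
    show "0 \<le> C + 2" using K(2) by simp
    show "\<And>x y. dist x y / K - (C + 2) \<le> gdist E (g x) (g y)" using appr qib by smt
    show "\<And>x y. gdist E (g x) (g y) \<le> K * dist x y + (C + 2)" using appr qib by smt
  qed
  define \<Delta> where "\<Delta> = H.\<Delta>"
  have D0: "0 \<le> \<Delta>" unfolding \<Delta>_def using hq_nonneg[OF H.hq_axioms] .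
  have BNp: "\<exists>z\<in>set zs. dist z (\<gamma> s) \<le> \<Delta>"
    if "isgeo \<gamma> x y" "0 \<le> s" "s \<le> dist x y" "walk (\<lambda>u v. dist u v \<le> 1) zs" "hd zs = x" "last zs = y"
    for \<gamma> :: "real \<Rightarrow> 'a" and x y s zs
    unfolding \<Delta>_def by (rule H.BN[OF that])
  define bp :: 'a where "bp = undefined"
  interpret Cn: constr bp using assms(1,2) by unfold_locales
  define h where "h = to_nat_on Cn.Vt"
  have inj: "inj_on h Cn.Vt" unfolding h_def using Cn.Vt_countable by (rule inj_on_to_nat_on)
  define W where "W = h ` Cn.Vt"
  define F where "F = (\<lambda>a b. \<exists>u v. Cn.Et u v \<and> a = h u \<and> b = h v)"
  interpret R': rooted W F "\<lambda>a. fst (inv_into Cn.Vt h a)" "\<lambda>a. h (Cn.pr (inv_into Cn.Vt h a))" "h Cn.rt"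
    unfolding W_def F_def by (rule Cn.R.transport[OF inj])
  have gdF: "gd F (h u) (h v) = gd Cn.Et u v" if "u \<in> Cn.Vt" "v \<in> Cn.Vt" for u v
    unfolding F_def by (rule Cn.R.transport_gd[OF inj that])
  have tree: "is_tree W F" by (rule R'.is_tree)
  have lf: "locally_finite_graph W F"
    unfolding locally_finite_graph_def
  proof
    fix a assume "a \<in> W"
    then obtain u where u: "u \<in> Cn.Vt" "a = h u" unfolding W_def by blast
    have "{b. F a b} \<subseteq> h ` {v. Cn.Et u v}"
    proof
      fix b assume "b \<in> {b. F a b}"
      then obtain u' v where e: "Cn.Et u' v" "a = h u'" "b = h v" unfolding F_def by blast
      have "u' \<in> Cn.Vt" using Cn.R.E_cases[OF e(1)] by blast
      then have "u' = u" using inj u e(2) by (metis inj_on_eq_iff)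
      then show "b \<in> h ` {v. Cn.Et u v}" using e by blast
    qed
    then show "finite {b. F a b}" using Cn.nbr_fin finite_subset by blast
  qed
  define f where "f x = (h (Cn.f0 x), h (Cn.f0 x), 0::real)" for x
  define C' where "C' = 6 + 4 * \<Delta>"
  have connW: "\<And>x y. x \<in> W \<Longrightarrow> y \<in> W \<Longrightarrow> conn F x y" by (rule R'.conn_all)
  have EW: "\<And>x y. F x y \<Longrightarrow> x \<in> W \<and> y \<in> W" using R'.E_cases by blast
  have f0W: "h (Cn.f0 x) \<in> W" for x unfolding W_def using Cn.f0_in by blast
  have fin: "f x \<in> tree_points W F" for x unfolding f_def tree_points_def using f0W by simp
  have dist_bounds: "dist x y - C' \<le> tree_dist F (f x) (f y) \<and> tree_dist F (f x) (f y) \<le> dist x y + C'" for x y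
  proof -
    have a1: "tree_dist F (f x) (f y) \<le> gdist F (h (Cn.f0 x)) (h (Cn.f0 y)) + 2"
      "gdist F (h (Cn.f0 x)) (h (Cn.f0 y)) \<le> tree_dist F (f x) (f y) + 2"
      using tree_dist_approx[OF connW EW R'.E_sym, of "h (Cn.f0 x)" "h (Cn.f0 x)" 0 "h (Cn.f0 y)" "h (Cn.f0 y)" 0]
        fin[of x] fin[of y] unfolding f_def by auto
    have "gdist F (h (Cn.f0 x)) (h (Cn.f0 y)) = real (gd Cn.Et (Cn.f0 x) (Cn.f0 y))"
      unfolding gdist_gd using gdF Cn.f0_in by simp
    moreover have "real (gd Cn.Et (Cn.f0 x) (Cn.f0 y)) \<le> dist x y + 2" by (rule Cn.gd_f0_upper)
    moreover have "dist x y - 4 - 4 * \<Delta> \<le> real (gd Cn.Et (Cn.f0 x) (Cn.f0 y))"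
      apply (rule Cn.gd_f0_lower[where \<Delta> = \<Delta>])
       apply (rule BNp; assumption)
      apply (rule D0)
      done
    ultimately show ?thesis using a1 D0 unfolding C'_def by linarith
  qed
  have cob: "\<exists>a. tree_dist F y (f a) \<le> C'" if y: "y \<in> tree_points W F" for y
  proof -
    obtain a b t where abt: "y = (a, b, t)" by (cases y) auto
    have aW: "a \<in> W" using y abt EW unfolding tree_points_def by auto
    then obtain u where u: "u \<in> Cn.Vt" "a = h u" unfolding W_def by blast
    obtain x where x: "Cn.f0 x = u" using Cn.f0_onto[OF u(1)] by blast
    have "tree_dist F (a, b, t) (f x) \<le> gdist F a (h (Cn.f0 x)) + 2"
      using tree_dist_approx(1)[OF connW EW R'.E_sym, of a b t "h (Cn.f0 x)" "h (Cn.f0 x)" 0] y abt fin[of x]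
      unfolding f_def by auto
    also have "gdist F a (h (Cn.f0 x)) = 0" using x u unfolding gdist_gd by simp
    finally have "tree_dist F (a, b, t) (f x) \<le> 2" by simp
    then have "tree_dist F y (f x) \<le> C'" using abt D0 unfolding C'_def by simp
    then show ?thesis by blast
  qed
  have "qi_map 1 C' (UNIV :: 'a set) dist (tree_points W F) (tree_dist F) f"
    unfolding qi_map_def using fin dist_bounds cob by auto
  moreover have "0 \<le> C'" unfolding C'_def using D0 by simp
  ultimately show ?thesis using tree lf by blast
qed


end
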